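(* Consider system (5) in the standing setup with fixed $\sigma$ and weights. If $\mathcal G_{\sigma(t)}$ is uniformly jointly L-connected (UJLC), then system (5) is SiISS with respect to $\mathcal L(y(t))$.
   Context: Standing setup. Fix integers $n\ge 2$, $k\ge 1$, $d\ge 1$. The follower set is $\mathcal V_F=\{1,\dots,n\}$ and the leader set is $\mathcal V_L=\{\hat 1,\dots,\hat k\}$ (disjoint from $\mathcal V_F$); $\mathcal V=\mathcal V_F\cup\mathcal V_L$. The interaction topology is a time-varying digraph $\mathcal G_{\sigma(t)}=(\mathcal V,\mathcal E_{\sigma(t)})$, where $\sigma:[0,\infty)\to\mathcal P$ is a piecewise constant switching signal taking values in a finite set $\mathcal P$ of digraphs on $\mathcal V$; no arc of any of these digraphs enters a leader. An arc $(j,i)$ means that $i$ receives information from $j$. Dwell-time assumption: any two consecutive switching instants of $\sigma$ are separated by at least $\tau_D>0$. For $i\in\mathcal V_F$, $N_i(\sigma(t))=\{j\in\mathcal V_F:(j,i)\in\mathcal E_{\sigma(t)}\}$ and $L_i(\sigma(t))=\{j\in\mathcal V_L:(j,i)\in\mathcal E_{\sigma(t)}\}$. $\mathcal G^F_{\sigma(t)}$ denotes the subgraph of $\mathcal G_{\sigma(t)}$ induced on $\mathcal V_F$. For $0\le t_1<t_2\le\infty$ the joint graph is $\mathcal G([t_1,t_2))=(\mathcal V,\bigcup_{t\in[t_1,t_2)}\mathcal E_{\sigma(t)})$, and $\mathcal G^F([t_1,t_2))$ is its subgraph induced on $\mathcal V_F$. System (5): $\dot y_i=u_i(y,t)$ for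 $i=1,\dots,k$, and $\dot x_i=\sum_{j\in N_i(\sigma(t))}a_{ij}(x,y,t)(x_j-x_i)+\sum_{j\in L_i(\sigma(t))}b_{ij}(x,y,t)(y_j-x_i)+w_i(t)$ for $i=1,\dots,n$, where $x_i,y_j\in\mathbb R^d$, $x=(x_1,\dots,x_n)$, $y=(y_1,\dots,y_k)$; each $u_i(y,t)$ is continuous in $y$ and piecewise continuous in $t$; each $w_i$ is continuous; the weights $a_{ij},b_{ij}$ are continuous and satisfy $a_*\le a_{ij}(x,y,t)\le a^*$, $b_{ij}(x,y,t)\ge b_*$ for all $x,y,t$, with constants $0<a_*\le a^*$, $b_*>0$. Initial time is $0$, $x^0=x(0)$, $y^0=y(0)$. Along a trajectory, $z(t)=(u_1(y(t),t),\dots,u_k(y(t),t),w_1(t),\dots,w_n(t))\in\mathbb R^{(n+k)d}$ and $\|z\|_\infty=\sup_{t\ge0}|z(t)|$. Set notation: $|\cdot|$ is the Euclidean norm; for a closed convex $K\subset\mathbb R^d$, $|v|_K=\inf_{p\in K}|v-p|$; $\mathcal L(y(t))=\mathrm{co}\{y_1(t),\dots,y_k(t)\}$ (convex hull); $|x(t)|_{\mathcal L(y(t))}=\max_{i\in\mathcal V_F}|x_i(t)|_{\mathcal L(y(t))}$. Connectivity: a digraph on $\mathcal V$ is L-connected if for every $i\in\mathcal V_F$ there is a directed path from some leader $j\in\mathcal V_L$ to $i$. $\mathcal G_{\sigma(t)}$ is jointly L-connected (JLC) if $\mathcal G([t,\infty))$ is L-connected for every $t\ge0$; it is uniformly jointly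 L-connected (UJLC) if there is $T>0$ such that $\mathcal G([t,t+T))$ is L-connected for every $t\ge0$. SiISS: system (5) is (globally, generalized) set integral-input-to-state stable with respect to $\mathcal L(y(t))$ if there exist a class-$\mathcal{KL}$ function $\beta$ and a class-$\mathcal K$ function $\gamma$ such that for all admissible $u_i,w_i$ and all initial conditions $x^0\in\mathbb R^{nd}$, $y^0\in\mathbb R^{kd}$: $|x(t)|_{\mathcal L(y(t))}\le\beta(|x^0|_{\mathcal L(y^0)},t)+\int_0^t\gamma(|z(s)|)\,ds$ for all $t\ge0$. *)

theory Defs
  imports "HOL-Analysis.Analysis"
begin

text \<open>Vertices: followers are \<open>Inl i\<close> with \<open>i :: 'n\<close>, leaders are \<open>Inr j\<close> with \<open>j :: 'k\<close>.
  A digraph on the vertex set is its arc relation; an arc \<open>(p, q)\<close> means q receives from p.\<close>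

type_synonym ('n, 'k) digraph = "('n + 'k) rel"

definition no_arc_into_leader :: "('n, 'k) digraph \<Rightarrow> bool" where
  "no_arc_into_leader E \<longleftrightarrow> (\<forall>(p, q) \<in> E. isl q)"

definition dwell_time_signal :: "(real \<Rightarrow> 'g) \<Rightarrow> real \<Rightarrow> bool" where
  "dwell_time_signal \<sigma> tauD \<longleftrightarrow> tauD > 0 \<and>
     (\<exists>ts :: nat \<Rightarrow> real. 0 < ts 0 \<and> (\<forall>m. ts m + tauD \<le> ts (Suc m)) \<and>
        (\<forall>t \<in> {0..<ts 0}. \<sigma> t = \<sigma> 0) \<and>
        (\<forall>m. \<forall>t \<in> {ts m..<ts (Suc m)}. \<sigma> t = \<sigma> (ts m)))"

definition joint_graph :: "(real \<Rightarrow> ('n, 'k) digraph) \<Rightarrow> real \<Rightarrow> real \<Rightarrow> ('n, 'k) digraph" where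
  "joint_graph \<sigma> t1 t2 = (\<Union>t \<in> {t1..<t2}. \<sigma> t)"

definition L_connected :: "('n, 'k) digraph \<Rightarrow> bool" where
  "L_connected E \<longleftrightarrow> (\<forall>i. \<exists>j. (Inr j, Inl i) \<in> E\<^sup>+)"

definition UJLC :: "(real \<Rightarrow> ('n, 'k) digraph) \<Rightarrow> bool" where
  "UJLC \<sigma> \<longleftrightarrow> (\<exists>T > 0. \<forall>t \<ge> 0. L_connected (joint_graph \<sigma> t (t + T)))"

definition piecewise_continuous :: "(real \<Rightarrow> 'a::real_normed_vector) \<Rightarrow> bool" where
  "piecewise_continuous f \<longleftrightarrow> (\<exists>D. (\<forall>a b. finite (D \<inter> {a..b})) \<and> continuous_on (- D) f \<and>
     (\<forall>t \<in> D. (\<exists>l. (f \<longlongrightarrow> l) (at_left t)) \<and> (\<exists>l. (f \<longlongrightarrow> l) (at_right t))))"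

definition follower_rhs ::
  "(real \<Rightarrow> ('n::finite, 'k::finite) digraph)
   \<Rightarrow> ('n \<Rightarrow> 'n \<Rightarrow> real^'d^'n \<Rightarrow> real^'d^'k \<Rightarrow> real \<Rightarrow> real)
   \<Rightarrow> ('n \<Rightarrow> 'k \<Rightarrow> real^'d^'n \<Rightarrow> real^'d^'k \<Rightarrow> real \<Rightarrow> real)
   \<Rightarrow> ('n \<Rightarrow> real \<Rightarrow> real^'d) \<Rightarrow> 'n \<Rightarrow> real^'d^'n \<Rightarrow> real^'d^'k \<Rightarrow> real \<Rightarrow> real^'d" where
  "follower_rhs \<sigma> a b w i x y t =
     (\<Sum>j \<in> {j. (Inl j, Inl i) \<in> \<sigma> t}. a i j x y t *\<^sub>R (x $ j - x $ i))
   + (\<Sum>j \<in> {j. (Inr j, Inl i) \<in> \<sigma> t}. b i j x y t *\<^sub>R (y $ j - x $ i))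
   + w i t"

definition is_solution5 ::
  "(real \<Rightarrow> ('n::finite, 'k::finite) digraph)
   \<Rightarrow> ('n \<Rightarrow> 'n \<Rightarrow> real^'d^'n \<Rightarrow> real^'d^'k \<Rightarrow> real \<Rightarrow> real)
   \<Rightarrow> ('n \<Rightarrow> 'k \<Rightarrow> real^'d^'n \<Rightarrow> real^'d^'k \<Rightarrow> real \<Rightarrow> real)
   \<Rightarrow> ('k \<Rightarrow> real^'d^'k \<Rightarrow> real \<Rightarrow> real^'d)
   \<Rightarrow> ('n \<Rightarrow> real \<Rightarrow> real^'d)
   \<Rightarrow> (real \<Rightarrow> real^'d^'n) \<Rightarrow> (real \<Rightarrow> real^'d^'k) \<Rightarrow> bool" where
  "is_solution5 \<sigma> a b u w x y \<longleftrightarrow>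
     (\<forall>t \<ge> 0. \<forall>j. ((\<lambda>s. u j (y s) s) has_integral (y t $ j - y 0 $ j)) {0..t}) \<and>
     (\<forall>t \<ge> 0. \<forall>i. ((\<lambda>s. follower_rhs \<sigma> a b w i (x s) (y s) s) has_integral (x t $ i - x 0 $ i)) {0..t})"

text \<open>Distance of the followers to the convex hull of the leaders: max_i |x_i|_L(y).\<close>
definition hull_dist :: "real^'d^'n::finite \<Rightarrow> real^'d^'k::finite \<Rightarrow> real" where
  "hull_dist x y = (MAX i. infdist (x $ i) (convex hull (range (\<lambda>j. y $ j))))"

definition z_norm :: "('k::finite \<Rightarrow> real^'d^'k \<Rightarrow> real \<Rightarrow> real^'d) \<Rightarrow> ('n::finite \<Rightarrow> real \<Rightarrow> real^'d)
   \<Rightarrow> (real \<Rightarrow> real^'d^'k) \<Rightarrow> real \<Rightarrow> real" where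
  "z_norm u w y t = sqrt ((\<Sum>j\<in>UNIV. (norm (u j (y t) t))\<^sup>2) + (\<Sum>i\<in>UNIV. (norm (w i t))\<^sup>2))"

definition class_K :: "(real \<Rightarrow> real) \<Rightarrow> bool" where
  "class_K \<gamma> \<longleftrightarrow> continuous_on {0..} \<gamma> \<and> \<gamma> 0 = 0 \<and> strict_mono_on {0..} \<gamma>"

definition class_KL :: "(real \<Rightarrow> real \<Rightarrow> real) \<Rightarrow> bool" where
  "class_KL \<beta> \<longleftrightarrow> (\<forall>t \<ge> 0. class_K (\<lambda>r. \<beta> r t)) \<and>
     (\<forall>r \<ge> 0. antimono_on {0..} (\<beta> r) \<and> ((\<beta> r) \<longlongrightarrow> 0) at_top)"

end

theory Submission
  imports Defs
begin

lemma mono_finite_exc: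
  fixes f :: "real \<Rightarrow> real"
  assumes S: "finite S" and ab: "a \<le> b" and cont: "continuous_on {a..b} f"
    and der: "\<And>x. x \<in> {a<..<b} - S \<Longrightarrow> \<exists>d. (f has_real_derivative d) (at x) \<and> d \<ge> 0"
  shows "f a \<le> f b"
proof -
  define f' where "f' x = (if x \<in> {a<..<b} - S then (SOME d. (f has_real_derivative d) (at x) \<and> d \<ge> 0) else 0)" for x
  have f'p: "(f has_real_derivative f' x) (at x) \<and> f' x \<ge> 0" if "x \<in> {a<..<b} - S" for x
    using someI_ex[OF der[OF that]] that unfolding f'_def by auto
  have "(f' has_integral (f b - f a)) {a..b}"
    apply (rule fundamental_theorem_of_calculus_interior_strong[OF S ab _ cont])
    using f'p has_real_derivative_iff_has_vector_derivative by blast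
  moreover have "\<forall>x\<in>{a..b}. 0 \<le> f' x" using f'p unfolding f'_def by auto
  ultimately have "0 \<le> f b - f a" using has_integral_nonneg by blast
  then show ?thesis by simp
qed

lemma left_decr:
  fixes g :: "real \<Rightarrow> real"
  assumes S: "finite S" and as: "a < s" and cont: "continuous_on {a..s} g"
    and del: "\<delta> > 0"
    and der: "\<And>r. s - \<delta> < r \<Longrightarrow> r < s \<Longrightarrow> r \<notin> S \<Longrightarrow> \<exists>d. (g has_real_derivative d) (at r) \<and> d \<le> 0"
  shows "\<exists>q\<in>{a..<s}. g s \<le> g q"
proof -
  define q where "q = max a (s - \<delta>/2)"
  have q: "q \<in> {a..<s}" using as del unfolding q_def by auto
  have "(\<lambda>x. - g x) q \<le> (\<lambda>x. - g x) s"
  proof (rule mono_finite_exc[OF S, of q s "\<lambda>x. - g x"])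
    show "q \<le> s" using q by auto
    show "continuous_on {q..s} (\<lambda>x. - g x)"
      by (intro continuous_intros continuous_on_subset[OF cont]) (use q in auto)
    fix x assume x: "x \<in> {q<..<s} - S"
    then have "s - \<delta> < x" "x < s" "x \<notin> S" unfolding q_def by auto
    from der[OF this] obtain d where "(g has_real_derivative d) (at x)" "d \<le> 0" by blast
    then show "\<exists>d. ((\<lambda>x. - g x) has_real_derivative d) (at x) \<and> 0 \<le> d"
      by (intro exI[of _ "-d"]) (auto intro: derivative_eq_intros)
  qed
  then show ?thesis using q by auto
qed

lemma first_crossing:
  fixes f h :: "'i \<Rightarrow> real \<Rightarrow> real"
  assumes I: "finite I" and ab: "a \<le> b"
    and cf: "\<And>i. i \<in> I \<Longrightarrow> continuous_on {a..b} (f i)"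
    and ch: "\<And>i. i \<in> I \<Longrightarrow> continuous_on {a..b} (h i)"
    and start: "\<And>i. i \<in> I \<Longrightarrow> f i a < h i a"
    and step: "\<And>s i. s \<in> {a<..b} \<Longrightarrow> i \<in> I \<Longrightarrow> f i s = h i s \<Longrightarrow>
        (\<forall>j\<in>I. \<forall>r\<in>{a..<s}. f j r < h j r) \<Longrightarrow> (\<forall>j\<in>I. f j s \<le> h j s) \<Longrightarrow>
        \<exists>q\<in>{a..<s}. f i s - h i s \<le> f i q - h i q"
  shows "\<forall>i\<in>I. \<forall>s\<in>{a..b}. f i s < h i s"
proof (rule ccontr)
  assume neg: "\<not> ?thesis"
  define C where "C = (\<Union>i\<in>I. {s\<in>{a..b}. h i s \<le> f i s})"
  have clo: "closed C" unfolding C_def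
  proof (intro closed_UN[OF I] ballI)
    fix i assume i: "i \<in> I"
    have "continuous_on {a..b} (\<lambda>s. f i s - h i s)" using cf[OF i] ch[OF i] by (intro continuous_intros)
    then have "closed ({a..b} \<inter> (\<lambda>s. f i s - h i s) -` {0..})"
      by (intro continuous_closed_preimage) auto
    moreover have "{a..b} \<inter> (\<lambda>s. f i s - h i s) -` {0..} = {s \<in> {a..b}. h i s \<le> f i s}" by auto
    ultimately show "closed {s \<in> {a..b}. h i s \<le> f i s}" by simp
  qed
  have ne: "C \<noteq> {}" using neg unfolding C_def by (force simp: not_less)
  have bdd: "bdd_below C" unfolding C_def by (auto intro: bdd_belowI[of _ a])
  define s where "s = Inf C"
  have sC: "s \<in> C" unfolding s_def using closed_contains_Inf[OF ne bdd clo] .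
  have sle: "\<And>r. r \<in> C \<Longrightarrow> s \<le> r" unfolding s_def using bdd by (auto intro: cInf_lower)
  obtain i where i: "i \<in> I" "s \<in> {a..b}" "h i s \<le> f i s" using sC unfolding C_def by auto
  have sa: "a < s" using start[OF i(1)] i by (cases "s = a") auto
  have below: "\<forall>j\<in>I. \<forall>r\<in>{a..<s}. f j r < h j r"
  proof (intro ballI)
    fix j r assume j: "j \<in> I" and r: "r \<in> {a..<s}"
    have "r \<notin> C" using sle r by force
    then show "f j r < h j r" using j r i(2) unfolding C_def by auto
  qed
  have atS: "\<forall>j\<in>I. f j s \<le> h j s"
  proof
    fix j assume j: "j \<in> I"
    have cc: "continuous_on {a..s} (\<lambda>s. f j s - h j s)"
      using cf[OF j] ch[OF j] i(2) by (intro continuous_intros) (auto elim: continuous_on_subset)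
    have "closed ({a..s} \<inter> (\<lambda>s. f j s - h j s) -` {..0})"
      by (intro continuous_closed_preimage[OF cc]) auto
    moreover have "{a..s} \<inter> (\<lambda>s. f j s - h j s) -` {..0} = {r \<in> {a..s}. (\<lambda>s. f j s - h j s) r \<in> {..0}}" by auto
    ultimately have "closed {r \<in> {a..s}. (\<lambda>s. f j s - h j s) r \<in> {..0}}" by simp
    moreover have "{a..<s} \<subseteq> {r \<in> {a..s}. (\<lambda>s. f j s - h j s) r \<in> {..0}}"
      using below j by fastforce
    ultimately have "closure {a..<s} \<subseteq> {r \<in> {a..s}. (\<lambda>s. f j s - h j s) r \<in> {..0}}"
      by (metis closure_minimal)
    moreover have "s \<in> closure {a..<s}" using sa by (simp add: closure_atLeastLessThan)
    ultimately have "s \<in> {r \<in> {a..s}. (\<lambda>s. f j s - h j s) r \<in> {..0}}" by blast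
    then show "f j s \<le> h j s" by auto
  qed
  have eq: "f i s = h i s" using atS i by force
  obtain q where q: "q \<in> {a..<s}" "f i s - h i s \<le> f i q - h i q"
    using step[of s i] sa i eq below atS by auto
  then show False using below i(1) eq by force
qed

lemma eventually_left_delta:
  fixes s :: real
  assumes ev: "eventually P (at s within {a..b})" and as: "a < s" and sb: "s \<le> b"
  shows "\<exists>\<delta>>0. \<delta> \<le> s - a \<and> (\<forall>r. s - \<delta> < r \<longrightarrow> r < s \<longrightarrow> P r)"
proof -
  obtain d where d: "d > 0" "\<forall>x\<in>{a..b}. x \<noteq> s \<and> dist x s < d \<longrightarrow> P x"
    using ev unfolding eventually_at by blast
  show ?thesis
  proof (intro exI[of _ "min d (s - a)"] conjI allI impI)
    show "0 < min d (s - a)" using d as by auto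
    show "min d (s - a) \<le> s - a" by auto
    fix r assume "s - min d (s - a) < r" "r < s"
    then show "P r" using d(2)[rule_format, of r] sb by (auto simp: dist_real_def)
  qed
qed

lemma lin_barrier:
  fixes z :: "real \<Rightarrow> real"
  assumes S: "finite S" and ab: "a \<le> b" and c: "c \<ge> 0" and A: "A \<ge> 0" and AB: "A + B \<ge> 0"
    and cont: "continuous_on {a..b} z"
    and der: "\<And>r. r \<in> {a<..<b} - S \<Longrightarrow> \<exists>d. (z has_real_derivative d) (at r) \<and> (z r \<ge> 0 \<longrightarrow> d \<le> c * (A - z r))"
    and start: "z a \<le> A + B"
  shows "\<forall>s\<in>{a..b}. z s \<le> A + B * exp (- c * (s - a))"
proof (intro ballI)
  fix s0 assume s0: "s0 \<in> {a..b}"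
  have hpos: "A + B * exp (- c * (s - a)) \<ge> 0" if "s \<ge> a" for s
  proof -
    have "0 \<le> c * (s - a)" using c that by simp
    then have e: "exp (- c * (s - a)) \<le> 1" "exp (- c * (s - a)) > 0" by auto
    have "A + B * exp (- c * (s - a)) = A * (1 - exp (- c * (s - a))) + (A + B) * exp (- c * (s - a))"
      by (simp add: algebra_simps)
    also have "\<dots> \<ge> 0"
    proof -
      have "A * (1 - exp (- c * (s - a))) \<ge> 0" using e A by simp
      moreover have "(A + B) * exp (- c * (s - a)) \<ge> 0" using e AB by simp
      ultimately show ?thesis by linarith
    qed
    finally show ?thesis .
  qed
  show "z s0 \<le> A + B * exp (- c * (s0 - a))"
  proof (rule field_le_epsilon)
    fix e :: real assume e: "e > 0"
    define h where "h s = A + B * exp (- c * (s - a)) + e" for s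
    have hder: "(h has_real_derivative (- c * B * exp (- c * (r - a)))) (at r)" for r
      unfolding h_def by (auto intro!: derivative_eq_intros)
    have hcont: "continuous_on {a..b} h" unfolding h_def by (intro continuous_intros)
    have "\<forall>i\<in>{()}. \<forall>s\<in>{a..b}. (\<lambda>_. z) i s < (\<lambda>_. h) i s"
    proof (rule first_crossing)
      show "finite {()}" by simp
      show "a \<le> b" by fact
      show "continuous_on {a..b} ((\<lambda>_. z) i)" for i using cont by simp
      show "continuous_on {a..b} ((\<lambda>_. h) i)" for i using hcont by simp
      show "(\<lambda>_. z) i a < (\<lambda>_. h) i a" for i using start e unfolding h_def by simp
      fix s i assume s: "s \<in> {a<..b}" and eq: "(\<lambda>_. z) i s = (\<lambda>_. h) i s"
      have zs: "z s > 0" using eq hpos[of s] s e unfolding h_def by auto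
      have t1: "((\<lambda>r. h r - z r) \<longlongrightarrow> h s - z s) (at s within {a..b})"
        using hcont cont s by (intro tendsto_intros) (auto simp: continuous_on_def)
      have t2: "(z \<longlongrightarrow> z s) (at s within {a..b})"
        using cont s by (auto simp: continuous_on_def)
      have "eventually (\<lambda>r. h r - z r < e) (at s within {a..b})"
        using order_tendstoD(2)[OF t1, of e] eq e by simp
      moreover have "eventually (\<lambda>r. z r > 0) (at s within {a..b})"
        using order_tendstoD(1)[OF t2, of 0] zs by simp
      ultimately have "eventually (\<lambda>r. h r - z r < e \<and> z r > 0) (at s within {a..b})"
        by (rule eventually_conj)
      then obtain \<delta> where \<delta>: "\<delta> > 0" "\<delta> \<le> s - a" "\<forall>r. s - \<delta> < r \<longrightarrow> r < s \<longrightarrow> h r - z r < e \<and> z r > 0"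
        using eventually_left_delta[of _ s a b] s by auto
      have "\<exists>q\<in>{a..<s}. (\<lambda>r. z r - h r) s \<le> (\<lambda>r. z r - h r) q"
      proof (rule left_decr[OF S _ _ \<delta>(1)])
        show "a < s" using s by simp
        show "continuous_on {a..s} (\<lambda>r. z r - h r)"
          using cont hcont s by (intro continuous_intros) (auto elim: continuous_on_subset)
        fix r assume r: "s - \<delta> < r" "r < s" "r \<notin> S"
        have rr: "r \<in> {a<..<b} - S" using r s \<delta> by auto
        obtain d where d: "(z has_real_derivative d) (at r)" "z r \<ge> 0 \<longrightarrow> d \<le> c * (A - z r)"
          using der[OF rr] by blast
        have hz: "h r - z r < e" "z r > 0" using \<delta>(3) r by auto
        have "d \<le> c * (A - z r)" using d(2) hz by auto
        also have "\<dots> \<le> c * (A - (h r - e))" using c hz by (intro mult_left_mono) auto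
        also have "\<dots> = - c * B * exp (- c * (r - a))" unfolding h_def by (simp add: algebra_simps)
        finally have dd: "d - (- c * B * exp (- c * (r - a))) \<le> 0" by simp
        show "\<exists>d. ((\<lambda>r. z r - h r) has_real_derivative d) (at r) \<and> d \<le> 0"
          using DERIV_diff[OF d(1) hder[of r]] dd by (intro exI[of _ "d - (- c * B * exp (- c * (r - a)))"]) simp
      qed
      then show "\<exists>q\<in>{a..<s}. (\<lambda>_. z) i s - (\<lambda>_. h) i s \<le> (\<lambda>_. z) i q - (\<lambda>_. h) i q" by simp
    qed
    then have "z s0 < h s0" using s0 by blast
    then show "z s0 \<le> A + B * exp (- c * (s0 - a)) + e" unfolding h_def by simp
  qed
qed

lemma max_principle:
  fixes z :: "'i::finite \<Rightarrow> real \<Rightarrow> real"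
  assumes S: "finite S" and ab: "a \<le> b" and L: "L \<ge> 0" and M: "M \<ge> 0"
    and cont: "\<And>i. continuous_on {a..b} (z i)"
    and der: "\<And>i r. r \<in> {a<..<b} - S \<Longrightarrow> \<exists>d. (z i has_real_derivative d) (at r) \<and>
                 (z i r \<ge> 0 \<longrightarrow> d \<le> L * (\<Sum>j\<in>UNIV. max 0 (z j r - z i r)))"
    and start: "\<And>i. z i a \<le> M"
  shows "\<forall>i. \<forall>s\<in>{a..b}. z i s \<le> M"
proof (intro allI ballI)
  fix i0 s0 assume s0: "s0 \<in> {a..b}"
  show "z i0 s0 \<le> M"
  proof (rule field_le_epsilon)
    fix e0 :: real assume e0: "e0 > 0"
    define e where "e = e0 / (1 + (b - a))"
    have e: "e > 0" unfolding e_def using e0 ab by auto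
    define h where "h s = M + e * (1 + (s - a))" for s
    have hder: "(h has_real_derivative e) (at r)" for r
      unfolding h_def by (auto intro!: derivative_eq_intros)
    have hcont: "continuous_on {a..b} h" unfolding h_def by (intro continuous_intros)
    have "\<forall>i\<in>UNIV. \<forall>s\<in>{a..b}. z i s < (\<lambda>_. h) i s"
    proof (rule first_crossing)
      show "finite (UNIV :: 'i set)" by simp
      show "a \<le> b" by fact
      show "continuous_on {a..b} (z i)" for i using cont by simp
      show "continuous_on {a..b} ((\<lambda>_. h) i)" for i using hcont by simp
      show "z i a < (\<lambda>_. h) i a" for i using start[of i] e M unfolding h_def by simp
      fix s i assume s: "s \<in> {a<..b}" and eq: "z i s = (\<lambda>_. h) i s"
        and all: "\<forall>j\<in>UNIV. z j s \<le> (\<lambda>_. h) j s"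
      have "e * (s - a) \<ge> 0" using s e by simp
      then have hs: "h s \<ge> e" unfolding h_def using M by (simp add: algebra_simps)
      have zs: "z i s > 0" using eq hs e by auto
      define \<phi> where "\<phi> r = L * (\<Sum>j\<in>UNIV. max 0 (z j r - z i r))" for r
      have phi0: "\<phi> s = 0" unfolding \<phi>_def using all eq by (auto intro!: sum.neutral)
      have t1: "(\<phi> \<longlongrightarrow> \<phi> s) (at s within {a..b})"
        unfolding \<phi>_def using cont s by (intro tendsto_intros) (auto simp: continuous_on_def)
      have t2: "(z i \<longlongrightarrow> z i s) (at s within {a..b})"
        using cont s by (auto simp: continuous_on_def)
      have "eventually (\<lambda>r. \<phi> r < e) (at s within {a..b})"
        using order_tendstoD(2)[OF t1, of e] phi0 e by simp
      moreover have "eventually (\<lambda>r. z i r > 0) (at s within {a..b})"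
        using order_tendstoD(1)[OF t2, of 0] zs by simp
      ultimately have "eventually (\<lambda>r. \<phi> r < e \<and> z i r > 0) (at s within {a..b})"
        by (rule eventually_conj)
      then obtain \<delta> where \<delta>: "\<delta> > 0" "\<delta> \<le> s - a" "\<forall>r. s - \<delta> < r \<longrightarrow> r < s \<longrightarrow> \<phi> r < e \<and> z i r > 0"
        using eventually_left_delta[of _ s a b] s by auto
      have "\<exists>q\<in>{a..<s}. (\<lambda>r. z i r - h r) s \<le> (\<lambda>r. z i r - h r) q"
      proof (rule left_decr[OF S _ _ \<delta>(1)])
        show "a < s" using s by simp
        show "continuous_on {a..s} (\<lambda>r. z i r - h r)"
          using continuous_on_subset[OF cont[of i], of "{a..s}"] continuous_on_subset[OF hcont, of "{a..s}"] s
          by (intro continuous_intros) auto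
        fix r assume r: "s - \<delta> < r" "r < s" "r \<notin> S"
        have rr: "r \<in> {a<..<b} - S" using r s \<delta> by auto
        obtain d where d: "(z i has_real_derivative d) (at r)"
            "z i r \<ge> 0 \<longrightarrow> d \<le> L * (\<Sum>j\<in>UNIV. max 0 (z j r - z i r))"
          using der[OF rr] by blast
        have hz: "\<phi> r < e" "z i r > 0" using \<delta>(3) r by auto
        have "d \<le> \<phi> r" using d(2) hz unfolding \<phi>_def by auto
        then have dd: "d - e \<le> 0" using hz by simp
        show "\<exists>d. ((\<lambda>r. z i r - h r) has_real_derivative d) (at r) \<and> d \<le> 0"
          using DERIV_diff[OF d(1) hder[of r]] dd by (intro exI[of _ "d - e"]) simp
      qed
      then show "\<exists>q\<in>{a..<s}. z i s - (\<lambda>_. h) i s \<le> z i q - (\<lambda>_. h) i q" by simp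
    qed
    then have "z i0 s0 < h s0" using s0 by blast
    also have "h s0 \<le> M + e * (1 + (b - a))" unfolding h_def using s0 e by (intro add_left_mono mult_left_mono) auto
    also have "\<dots> = M + e0" unfolding e_def using ab by (simp add: field_simps)
    finally show "z i0 s0 \<le> M + e0" by simp
  qed
qed

definition Dfun :: "(real \<Rightarrow> ('n::finite, 'k::finite) digraph) \<Rightarrow> ('n \<Rightarrow> 'n \<Rightarrow> real \<Rightarrow> real)
   \<Rightarrow> ('n \<Rightarrow> 'k \<Rightarrow> real \<Rightarrow> real) \<Rightarrow> ('n \<Rightarrow> real \<Rightarrow> real) \<Rightarrow> 'n \<Rightarrow> real \<Rightarrow> real" where
  "Dfun \<sigma> \<alpha> \<beta> z i r = (\<Sum>j\<in>{j. (Inl j, Inl i) \<in> \<sigma> r}. \<alpha> i j r * (z j r - z i r))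
      - (\<Sum>j\<in>{j. (Inr j, Inl i) \<in> \<sigma> r}. \<beta> i j r) * z i r"

lemma alpha_term_le:
  fixes al ah d m :: real
  assumes "al \<le> \<alpha>" "\<alpha> \<le> ah" "0 \<le> al" "d \<le> m" "0 \<le> m"
  shows "\<alpha> * d \<le> ah * m"
proof (cases "d \<ge> 0")
  case True
  then have "\<alpha> * d \<le> ah * d" using assms by (intro mult_right_mono) auto
  also have "\<dots> \<le> ah * m" using assms by (intro mult_left_mono) auto
  finally show ?thesis .
next
  case False
  then have "\<alpha> * d \<le> 0" using assms by (simp add: mult_nonneg_nonpos)
  also have "0 \<le> ah * m" using assms by simp
  finally show ?thesis .
qed

lemma alpha_term_le2:
  fixes al ah d m :: real
  assumes "al \<le> \<alpha>" "\<alpha> \<le> ah" "0 \<le> al" "d \<le> m - \<delta>" "d \<le> m" "0 \<le> m" "0 \<le> \<delta>"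
  shows "\<alpha> * d \<le> ah * m - al * \<delta>"
proof (cases "d \<ge> 0")
  case True
  then have "\<alpha> * d \<le> ah * d" using assms by (intro mult_right_mono) auto
  also have "\<dots> \<le> ah * (m - \<delta>)" using assms True by (intro mult_left_mono) auto
  also have "\<dots> \<le> ah * m - al * \<delta>"
  proof -
    have "al * \<delta> \<le> ah * \<delta>" using assms by (intro mult_right_mono) auto
    then show ?thesis by (simp add: algebra_simps)
  qed
  finally show ?thesis .
next
  case False
  then have "\<alpha> * d \<le> al * d" using assms by (intro mult_right_mono_neg) auto
  also have "\<dots> \<le> al * (m - \<delta>)" using assms by (intro mult_left_mono) auto
  also have "\<dots> \<le> ah * m - al * \<delta>"
  proof -
    have "al * m \<le> ah * m" using assms by (intro mult_right_mono) auto
    then show ?thesis by (simp add: algebra_simps)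
  qed
  finally show ?thesis .
qed

locale wbounds =
  fixes \<alpha> :: "'n::finite \<Rightarrow> 'n \<Rightarrow> real \<Rightarrow> real" and \<beta> :: "'n \<Rightarrow> 'k::finite \<Rightarrow> real \<Rightarrow> real"
    and alo ahi blo :: real
  assumes alo: "0 < alo" and aloahi: "alo \<le> ahi" and blo: "0 < blo"
    and abnd: "\<And>i j r. alo \<le> \<alpha> i j r \<and> \<alpha> i j r \<le> ahi"
    and bbnd: "\<And>i j r. blo \<le> \<beta> i j r"
begin

definition "K = real CARD('n) * ahi"

lemma K_pos: "K > 0" unfolding K_def using alo aloahi by simp

lemma FP_le_max:
  fixes z :: "'n \<Rightarrow> real \<Rightarrow> real"
  shows "(\<Sum>j\<in>{j. (Inl j, Inl i) \<in> \<sigma> r}. \<alpha> i j r * (z j r - z i r)) \<le> ahi * (\<Sum>j\<in>UNIV. max 0 (z j r - z i r))"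
proof -
  have "(\<Sum>j\<in>{j. (Inl j, Inl i) \<in> \<sigma> r}. \<alpha> i j r * (z j r - z i r))
      \<le> (\<Sum>j\<in>{j. (Inl j, Inl i) \<in> \<sigma> r}. ahi * max 0 (z j r - z i r))"
    using abnd alo by (intro sum_mono alpha_term_le[where al=alo]) (auto intro: order.trans)
  also have "\<dots> \<le> (\<Sum>j\<in>UNIV. ahi * max 0 (z j r - z i r))"
    using alo aloahi by (intro sum_mono2) auto
  finally show ?thesis by (simp add: sum_distrib_left)
qed

lemma LP_nonneg: "0 \<le> (\<Sum>j\<in>{j. (Inr j, Inl i) \<in> \<sigma> r}. \<beta> i j r)"
  using bbnd blo by (intro sum_nonneg) (auto intro: order.trans[OF less_imp_le])

lemma LP_ge: assumes "(Inr l, Inl i) \<in> \<sigma> r" shows "blo \<le> (\<Sum>j\<in>{j. (Inr j, Inl i) \<in> \<sigma> r}. \<beta> i j r)"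
proof -
  have "blo \<le> \<beta> i l r" by (rule bbnd)
  also have "\<dots> \<le> (\<Sum>j\<in>{j. (Inr j, Inl i) \<in> \<sigma> r}. \<beta> i j r)"
    using assms bbnd blo by (intro member_le_sum) (auto intro: order.trans[OF less_imp_le])
  finally show ?thesis .
qed

lemma D_le_max:
  assumes "z i r \<ge> 0"
  shows "Dfun \<sigma> \<alpha> \<beta> z i r \<le> ahi * (\<Sum>j\<in>UNIV. max 0 (z j r - z i r))"
proof -
  have "0 \<le> (\<Sum>j\<in>{j. (Inr j, Inl i) \<in> \<sigma> r}. \<beta> i j r) * z i r"
    using LP_nonneg[where i=i and \<sigma>=\<sigma> and r=r] assms by simp
  then show ?thesis unfolding Dfun_def using FP_le_max[where \<sigma>=\<sigma> and i=i and r=r and z=z] by linarith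
qed

lemma sum_max_le:
  fixes z :: "'n \<Rightarrow> real \<Rightarrow> real"
  assumes "\<And>j. z j r \<le> M" "z i r \<le> M"
  shows "ahi * (\<Sum>j\<in>UNIV. max 0 (z j r - z i r)) \<le> K * (M - z i r)"
proof -
  have "max 0 (z j r - z i r) \<le> M - z i r" for j using assms(1)[of j] assms(2) by auto
  then have "(\<Sum>j\<in>UNIV. max 0 (z j r - z i r)) \<le> (\<Sum>j\<in>(UNIV::'n set). M - z i r)"
    by (rule sum_mono)
  then have "ahi * (\<Sum>j\<in>UNIV. max 0 (z j r - z i r)) \<le> ahi * (real CARD('n) * (M - z i r))"
    using alo aloahi by (intro mult_left_mono) auto
  then show ?thesis unfolding K_def by (simp add: algebra_simps)
qed

lemma D_le_K:
  assumes "z i r \<ge> 0" "\<And>j. z j r \<le> M"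
  shows "Dfun \<sigma> \<alpha> \<beta> z i r \<le> K * (M - z i r)"
proof -
  have "Dfun \<sigma> \<alpha> \<beta> z i r \<le> ahi * (\<Sum>j\<in>UNIV. max 0 (z j r - z i r))"
    by (rule D_le_max) (rule assms(1))
  then show ?thesis using sum_max_le[where z=z and r=r and M=M and i=i] assms by fastforce
qed

lemma D_le_lead:
  assumes "z i r \<ge> 0" "\<And>j. z j r \<le> M" "(Inr l, Inl i) \<in> \<sigma> r"
  shows "Dfun \<sigma> \<alpha> \<beta> z i r \<le> K * (M - z i r) - blo * z i r"
proof -
  have "blo * z i r \<le> (\<Sum>j\<in>{j. (Inr j, Inl i) \<in> \<sigma> r}. \<beta> i j r) * z i r"
    using LP_ge[where \<sigma>=\<sigma> and r=r and l=l and i=i] assms(1,3) by (intro mult_right_mono) auto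
  moreover have "(\<Sum>j\<in>{j. (Inl j, Inl i) \<in> \<sigma> r}. \<alpha> i j r * (z j r - z i r)) \<le> K * (M - z i r)"
    using FP_le_max[where \<sigma>=\<sigma> and i=i and r=r and z=z] sum_max_le[where z=z and r=r and M=M and i=i] assms by fastforce
  ultimately show ?thesis unfolding Dfun_def by linarith
qed

lemma D_le_fol:
  assumes "z i r \<ge> 0" "\<And>j. z j r \<le> M" "(Inl k, Inl i) \<in> \<sigma> r" "z k r \<le> M - \<delta> * M" "0 \<le> \<delta>" "0 \<le> M"
  shows "Dfun \<sigma> \<alpha> \<beta> z i r \<le> K * (M - z i r) - alo * (\<delta> * M)"
proof -
  let ?A = "{j. (Inl j, Inl i) \<in> \<sigma> r}"
  have kA: "k \<in> ?A" using assms by simp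
  have Mz: "0 \<le> M - z i r" using assms(2)[of i] by simp
  have "(\<Sum>j\<in>?A. \<alpha> i j r * (z j r - z i r)) = \<alpha> i k r * (z k r - z i r) + (\<Sum>j\<in>?A - {k}. \<alpha> i j r * (z j r - z i r))"
    using kA by (simp add: sum.remove)
  also have "\<dots> \<le> (ahi * (M - z i r) - alo * (\<delta> * M)) + (\<Sum>j\<in>?A - {k}. ahi * (M - z i r))"
  proof (intro add_mono sum_mono)
    show "\<alpha> i k r * (z k r - z i r) \<le> ahi * (M - z i r) - alo * (\<delta> * M)"
      using abnd[of i k r] alo assms Mz mult_nonneg_nonneg[OF assms(5,6)] by (intro alpha_term_le2) auto
    fix j assume "j \<in> ?A - {k}"
    show "\<alpha> i j r * (z j r - z i r) \<le> ahi * (M - z i r)"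
      using abnd[of i j r] alo assms Mz by (intro alpha_term_le[where al=alo]) auto
  qed
  also have "\<dots> = ahi * (M - z i r) * (1 + real (card (?A - {k}))) - alo * (\<delta> * M)"
    by (simp add: algebra_simps)
  also have "\<dots> \<le> ahi * (M - z i r) * real CARD('n) - alo * (\<delta> * M)"
  proof -
    have "card (?A - {k}) = card ?A - 1" using kA by simp
    moreover have "card ?A \<le> CARD('n)" by (rule card_mono) auto
    moreover have "card ?A \<ge> 1" using kA by (metis One_nat_def Suc_leI card_gt_0_iff empty_iff finite)
    ultimately have "1 + real (card (?A - {k})) \<le> real CARD('n)" by linarith
    moreover have "0 \<le> ahi * (M - z i r)" using Mz alo aloahi by simp
    ultimately show ?thesis by (simp add: mult_left_mono)
  qed
  finally have "(\<Sum>j\<in>?A. \<alpha> i j r * (z j r - z i r)) \<le> K * (M - z i r) - alo * (\<delta> * M)"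
    unfolding K_def by (simp add: algebra_simps)
  moreover have "0 \<le> (\<Sum>j\<in>{j. (Inr j, Inl i) \<in> \<sigma> r}. \<beta> i j r) * z i r"
    using LP_nonneg[where i=i and \<sigma>=\<sigma> and r=r] assms(1) by simp
  ultimately show ?thesis unfolding Dfun_def by linarith
qed

end

context wbounds begin

definition dhyp :: "(real \<Rightarrow> ('n, 'k) digraph) \<Rightarrow> ('n \<Rightarrow> real \<Rightarrow> real) \<Rightarrow> real set \<Rightarrow> real \<Rightarrow> real \<Rightarrow> bool" where
  "dhyp \<sigma> z S a b \<longleftrightarrow> (\<forall>i. \<forall>r\<in>{a<..<b} - S. \<exists>d. (z i has_real_derivative d) (at r) \<and> d \<le> Dfun \<sigma> \<alpha> \<beta> z i r)"

lemma dhyp_mono: "dhyp \<sigma> z S a b \<Longrightarrow> a \<le> a' \<Longrightarrow> b' \<le> b \<Longrightarrow> dhyp \<sigma> z S a' b'"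
  unfolding dhyp_def by (meson DiffD1 DiffD2 DiffI greaterThanLessThan_iff order_le_less_trans order_less_le_trans)

lemma card_ge1: "real CARD('n) \<ge> 1"
  using card_ge_0_finite[of "UNIV :: 'n set"] by simp

lemma alo_le_K: "alo \<le> K"
proof -
  have "ahi * 1 \<le> ahi * real CARD('n)" using card_ge1 alo aloahi by (intro mult_left_mono) auto
  then show ?thesis unfolding K_def using aloahi by (simp add: mult.commute)
qed

lemma all_le_M:
  assumes S: "finite S" and ab: "a \<le> b" and M: "M \<ge> 0"
    and cont: "\<And>i. continuous_on {a..b} (z i)" and dh: "dhyp \<sigma> z S a b"
    and start: "\<And>i. z i a \<le> M"
  shows "\<forall>i. \<forall>s\<in>{a..b}. z i s \<le> M"
proof (rule max_principle[OF S ab _ M cont _ start])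
  show "0 \<le> ahi" using alo aloahi by simp
  fix i r assume r: "r \<in> {a<..<b} - S"
  obtain d where d: "(z i has_real_derivative d) (at r)" "d \<le> Dfun \<sigma> \<alpha> \<beta> z i r"
    using dh r unfolding dhyp_def by blast
  show "\<exists>d. (z i has_real_derivative d) (at r) \<and> (0 \<le> z i r \<longrightarrow> d \<le> ahi * (\<Sum>j\<in>UNIV. max 0 (z j r - z i r)))"
    using d D_le_max[where z=z and i=i and r=r and \<sigma>=\<sigma>] by (intro exI[of _ d]) auto
qed

lemma pers:
  assumes S: "finite S" and ab: "a \<le> b" and M: "M \<ge> 0"
    and cont: "\<And>i. continuous_on {a..b} (z i)" and dh: "dhyp \<sigma> z S a b"
    and allM: "\<And>j s. s \<in> {a..b} \<Longrightarrow> z j s \<le> M"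
    and start: "z i a \<le> M - \<delta> * M" and d0: "0 \<le> \<delta>" and d1: "\<delta> \<le> 1"
  shows "\<forall>s\<in>{a..b}. z i s \<le> M - \<delta> * M * exp (- K * (s - a))"
proof -
  have "\<forall>s\<in>{a..b}. z i s \<le> M + (- (\<delta> * M)) * exp (- K * (s - a))"
  proof (rule lin_barrier[OF S ab _ M _ cont])
    show "0 \<le> K" using K_pos by simp
    show "0 \<le> M + - (\<delta> * M)" using mult_right_mono[OF d1 M] by simp
    show "z i a \<le> M + - (\<delta> * M)" using start by simp
    fix r assume r: "r \<in> {a<..<b} - S"
    obtain d where d: "(z i has_real_derivative d) (at r)" "d \<le> Dfun \<sigma> \<alpha> \<beta> z i r"
      using dh r unfolding dhyp_def by blast
    have "0 \<le> z i r \<Longrightarrow> Dfun \<sigma> \<alpha> \<beta> z i r \<le> K * (M - z i r)"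
      by (rule D_le_K) (use allM r in auto)
    then show "\<exists>d. (z i has_real_derivative d) (at r) \<and> (0 \<le> z i r \<longrightarrow> d \<le> K * (M - z i r))"
      using d by (intro exI[of _ d]) auto
  qed
  then show ?thesis by simp
qed

definition "dL \<tau> = blo / (K + blo) * (1 - exp (- (K + blo) * \<tau>))"
definition "dF \<tau> = alo / K * (1 - exp (- K * \<tau>))"

lemma dL_bounds: "\<tau> > 0 \<Longrightarrow> 0 < dL \<tau> \<and> dL \<tau> \<le> 1"
proof -
  assume t: "\<tau> > 0"
  have Kb: "K + blo > 0" using K_pos blo by simp
  have "0 < (K + blo) * \<tau>" using Kb t by simp
  then have "- (K + blo) * \<tau> < 0" by (simp only: mult_minus_left neg_less_0_iff_less)
  then have e: "exp (- (K + blo) * \<tau>) < 1" by simp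
  have f: "blo / (K + blo) \<le> 1" "blo / (K + blo) > 0" using Kb K_pos blo by auto
  have g: "0 < 1 - exp (- (K + blo) * \<tau>)" "1 - exp (- (K + blo) * \<tau>) \<le> 1" using e by auto
  show ?thesis unfolding dL_def using mult_pos_pos[OF f(2) g(1)] mult_le_one[OF f(1) _ g(2)] f g by auto
qed

lemma dF_bounds: "\<tau> > 0 \<Longrightarrow> 0 < dF \<tau> \<and> dF \<tau> \<le> 1"
proof -
  assume t: "\<tau> > 0"
  have "0 < K * \<tau>" using K_pos t by simp
  then have e: "exp (- K * \<tau>) < 1" by simp
  have f: "alo / K \<le> 1" "alo / K > 0" using K_pos alo alo_le_K by auto
  have g: "0 < 1 - exp (- K * \<tau>)" "1 - exp (- K * \<tau>) \<le> 1" using e by auto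
  show ?thesis unfolding dF_def using mult_pos_pos[OF f(2) g(1)] mult_le_one[OF f(1) _ g(2)] f g by auto
qed

lemma lead:
  assumes S: "finite S" and ab: "a \<le> b" and M: "M \<ge> 0"
    and cont: "\<And>i. continuous_on {a..b} (z i)" and dh: "dhyp \<sigma> z S a b"
    and allM: "\<And>j s. s \<in> {a..b} \<Longrightarrow> z j s \<le> M"
    and arc: "\<And>r. r \<in> {a<..<b} \<Longrightarrow> (Inr l, Inl i) \<in> \<sigma> r"
  shows "z i b \<le> M - dL (b - a) * M"
proof -
  have Kb: "K + blo > 0" using K_pos blo by simp
  define A where "A = K * M / (K + blo)"
  have A0: "A \<ge> 0" unfolding A_def using K_pos M Kb by simp
  have "\<forall>s\<in>{a..b}. z i s \<le> A + (M - A) * exp (- (K + blo) * (s - a))"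
  proof (rule lin_barrier[OF S ab _ A0 _ cont])
    show "0 \<le> K + blo" using Kb by simp
    show "0 \<le> A + (M - A)" using M by simp
    show "z i a \<le> A + (M - A)" using allM[of a i] ab by simp
    fix r assume r: "r \<in> {a<..<b} - S"
    obtain d where d: "(z i has_real_derivative d) (at r)" "d \<le> Dfun \<sigma> \<alpha> \<beta> z i r"
      using dh r unfolding dhyp_def by blast
    have "0 \<le> z i r \<Longrightarrow> Dfun \<sigma> \<alpha> \<beta> z i r \<le> K * (M - z i r) - blo * z i r"
      by (rule D_le_lead) (use allM r arc in auto)
    moreover have "K * (M - z i r) - blo * z i r = (K + blo) * (A - z i r)"
      unfolding A_def using Kb by (simp add: field_simps)
    ultimately show "\<exists>d. (z i has_real_derivative d) (at r) \<and> (0 \<le> z i r \<longrightarrow> d \<le> (K + blo) * (A - z i r))"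
      using d by (intro exI[of _ d]) auto
  qed
  then have "z i b \<le> A + (M - A) * exp (- (K + blo) * (b - a))" using ab by auto
  also have "\<dots> = M - dL (b - a) * M"
  proof -
    define q where "q = exp (- (K + blo) * (b - a))"
    have "M - A = blo * M / (K + blo)" unfolding A_def using Kb by (simp add: field_simps)
    moreover have "A + (M - A) * q = M - (M - A) * (1 - q)" by (simp add: algebra_simps)
    ultimately have "A + (M - A) * q = M - blo / (K + blo) * (1 - q) * M" by simp
    then show ?thesis unfolding dL_def q_def by simp
  qed
  finally show ?thesis .
qed

lemma fol:
  assumes S: "finite S" and ab: "a \<le> b" and M: "M \<ge> 0"
    and cont: "\<And>i. continuous_on {a..b} (z i)" and dh: "dhyp \<sigma> z S a b"
    and allM: "\<And>j s. s \<in> {a..b} \<Longrightarrow> z j s \<le> M"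
    and arc: "\<And>r. r \<in> {a<..<b} \<Longrightarrow> (Inl k, Inl i) \<in> \<sigma> r \<and> z k r \<le> M - \<delta> * M"
    and d0: "0 \<le> \<delta>" and d1: "\<delta> \<le> 1"
  shows "z i b \<le> M - \<delta> * dF (b - a) * M"
proof -
  define A where "A = M - alo * (\<delta> * M) / K"
  have "alo * (\<delta> * M) \<le> K * M"
  proof -
    have "alo * (\<delta> * M) \<le> alo * M" using alo mult_right_mono[OF d1 M] by (intro mult_left_mono) auto
    also have "\<dots> \<le> K * M" using alo_le_K M by (intro mult_right_mono) auto
    finally show ?thesis .
  qed
  then have A0: "A \<ge> 0" unfolding A_def using K_pos by (simp add: field_simps)
  have "\<forall>s\<in>{a..b}. z i s \<le> A + (M - A) * exp (- K * (s - a))"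
  proof (rule lin_barrier[OF S ab _ A0 _ cont])
    show "0 \<le> K" using K_pos by simp
    show "0 \<le> A + (M - A)" using M by simp
    show "z i a \<le> A + (M - A)" using allM[of a i] ab by simp
    fix r assume r: "r \<in> {a<..<b} - S"
    obtain d where d: "(z i has_real_derivative d) (at r)" "d \<le> Dfun \<sigma> \<alpha> \<beta> z i r"
      using dh r unfolding dhyp_def by blast
    have "0 \<le> z i r \<Longrightarrow> Dfun \<sigma> \<alpha> \<beta> z i r \<le> K * (M - z i r) - alo * (\<delta> * M)"
      by (rule D_le_fol[where k=k]) (use allM r arc d0 M in auto)
    moreover have "K * (M - z i r) - alo * (\<delta> * M) = K * (A - z i r)"
      unfolding A_def using K_pos by (simp add: field_simps)
    ultimately show "\<exists>d. (z i has_real_derivative d) (at r) \<and> (0 \<le> z i r \<longrightarrow> d \<le> K * (A - z i r))"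
      using d by (intro exI[of _ d]) auto
  qed
  then have "z i b \<le> A + (M - A) * exp (- K * (b - a))" using ab by auto
  also have "\<dots> = M - \<delta> * dF (b - a) * M"
  proof -
    define q where "q = exp (- K * (b - a))"
    have "M - A = alo * (\<delta> * M) / K" unfolding A_def by simp
    moreover have "A + (M - A) * q = M - (M - A) * (1 - q)" by (simp add: algebra_simps)
    ultimately have "A + (M - A) * q = M - \<delta> * (alo / K * (1 - q)) * M" by simp
    then show ?thesis unfolding dF_def q_def by simp
  qed
  finally show ?thesis .
qed

end

lemma weaken_bd: "y \<le> x \<Longrightarrow> 0 \<le> (M::real) \<Longrightarrow> z \<le> M - x * M \<Longrightarrow> z \<le> M - y * M"
  using mult_right_mono[of y x M] by linarith

context wbounds begin

definition "kap \<tau> W = exp (- 2 * K * W) * min (dF \<tau>) (dL \<tau>)"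

lemma kap_bounds:
  assumes t: "\<tau> > 0" and W: "W > 0"
  shows "0 < kap \<tau> W" "kap \<tau> W \<le> exp (- 2 * K * W) * dF \<tau>" "kap \<tau> W \<le> exp (- 2 * K * W) * dL \<tau>"
    "kap \<tau> W < 1" "kap \<tau> W \<le> exp (- K * W)"
proof -
  have F: "0 < dF \<tau>" "dF \<tau> \<le> 1" using dF_bounds[OF t] by auto
  have L: "0 < dL \<tau>" "dL \<tau> \<le> 1" using dL_bounds[OF t] by auto
  have KW: "K * W > 0" using K_pos W by simp
  have e1: "exp (- 2 * K * W) < 1" using KW by (simp add: mult.commute)
  have e2: "exp (- 2 * K * W) \<le> exp (- K * W)" using KW by (simp add: mult.commute)
  have m: "0 < min (dF \<tau>) (dL \<tau>)" "min (dF \<tau>) (dL \<tau>) \<le> 1" using F L by auto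
  show "0 < kap \<tau> W" unfolding kap_def using m by simp
  show "kap \<tau> W \<le> exp (- 2 * K * W) * dF \<tau>" unfolding kap_def by (intro mult_left_mono) auto
  show "kap \<tau> W \<le> exp (- 2 * K * W) * dL \<tau>" unfolding kap_def by (intro mult_left_mono) auto
  have "kap \<tau> W \<le> exp (- 2 * K * W)" unfolding kap_def using m mult_left_mono[OF m(2), of "exp (- 2 * K * W)"] by simp
  then show "kap \<tau> W < 1" "kap \<tau> W \<le> exp (- K * W)" using e1 e2 by linarith+
qed

definition act :: "(real \<Rightarrow> ('n, 'k) digraph) \<Rightarrow> real \<Rightarrow> real \<Rightarrow> real \<Rightarrow> bool" where
  "act \<sigma> \<tau> W t0 \<longleftrightarrow> (\<forall>t\<ge>t0. \<forall>G. G \<noteq> (UNIV::'n set) \<longrightarrow> (\<exists>i. i \<notin> G \<and> (\<exists>s1. t \<le> s1 \<and> s1 + \<tau> \<le> t + W \<and>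
      ((\<exists>l. \<forall>r\<in>{s1<..<s1+\<tau>}. (Inr l, Inl i) \<in> \<sigma> r) \<or> (\<exists>k\<in>G. \<forall>r\<in>{s1<..<s1+\<tau>}. (Inl k, Inl i) \<in> \<sigma> r)))))"

lemma contraction:
  assumes S: "finite S" and t: "\<tau> > 0" and tW: "\<tau> \<le> W" and ac: "act \<sigma> \<tau> W t0" and M: "M \<ge> 0"
    and cont: "\<And>i. continuous_on {t0..t0 + real CARD('n) * W} (z i)"
    and dh: "dhyp \<sigma> z S t0 (t0 + real CARD('n) * W)"
    and start: "\<And>i. z i t0 \<le> M"
  shows "\<forall>i. z i (t0 + real CARD('n) * W) \<le> M - kap \<tau> W ^ CARD('n) * M"
proof -
  define E where "E = t0 + real CARD('n) * W"
  have W: "W > 0" using t tW by simp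
  have t0E: "t0 \<le> E" unfolding E_def using W by simp
  have allM: "\<And>j s. s \<in> {t0..E} \<Longrightarrow> z j s \<le> M"
    using all_le_M[OF S t0E M cont[folded E_def] dh[folded E_def] start] by blast
  have contr: "continuous_on {a..b} (z i)" if "t0 \<le> a" "b \<le> E" for a b i
    using cont[of i] that by (auto elim: continuous_on_subset simp: E_def)
  have dhr: "dhyp \<sigma> z S a b" if "t0 \<le> a" "b \<le> E" for a b
    using dhyp_mono[OF dh that[unfolded E_def]] .
  have allMr: "\<And>j s. s \<in> {a..b} \<Longrightarrow> z j s \<le> M" if "t0 \<le> a" "b \<le> E" for a b
    using allM that by auto
  have persr: "\<forall>s\<in>{a..b}. z i s \<le> M - \<delta> * M * exp (- K * (s - a))"
    if "t0 \<le> a" "a \<le> b" "b \<le> E" "z i a \<le> M - \<delta> * M" "0 \<le> \<delta>" "\<delta> \<le> 1" for a b i \<delta>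
    by (rule pers[OF S that(2) M contr dhr allMr]) (use that in auto)
  define \<kappa> where "\<kappa> = kap \<tau> W"
  note kb = kap_bounds[OF t W, folded \<kappa>_def]
  have ind: "\<exists>G. k \<le> card G \<and> (\<forall>i\<in>G. z i (t0 + real k * W) \<le> M - \<kappa> ^ k * M)" if "k \<le> CARD('n)" for k
    using that
  proof (induction k)
    case 0 show ?case by (intro exI[of _ "{}"]) auto
  next
    case (Suc k)
    obtain G where G: "k \<le> card G" "\<forall>i\<in>G. z i (t0 + real k * W) \<le> M - \<kappa> ^ k * M"
      using Suc by auto
    define tk where "tk = t0 + real k * W"
    have tk0: "t0 \<le> tk" unfolding tk_def using W by simp
    have "real (Suc k) \<le> real CARD('n)" using Suc.prems by linarith
    then have "W * real (Suc k) \<le> W * real CARD('n)" using W by (intro mult_left_mono) auto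
    then have tk1E: "tk + W \<le> E" unfolding tk_def E_def by (simp add: algebra_simps)
    have tk1: "t0 + real (Suc k) * W = tk + W" unfolding tk_def by (simp add: algebra_simps)
    have kk: "0 \<le> \<kappa> ^ k" "\<kappa> ^ k \<le> 1" using kb by (auto intro: power_le_one)
    have eKW: "exp (- K * W) \<le> exp (- K * (s - a))" if "s - a \<le> W" for s a
      using that K_pos by (simp add: mult_left_mono)
    have memb: "z g s \<le> M - (\<kappa> ^ k * exp (- K * W)) * M" if "g \<in> G" "s \<in> {tk..tk+W}" for g s
    proof -
      have "z g s \<le> M - \<kappa> ^ k * M * exp (- K * (s - tk))"
        using persr[of tk "tk + W" g "\<kappa> ^ k"] G(2) that tk0 tk1E kk W unfolding tk_def by auto
      moreover have "\<kappa> ^ k * M * exp (- K * W) \<le> \<kappa> ^ k * M * exp (- K * (s - tk))"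
        using eKW[of s tk] that kk M by (intro mult_left_mono) auto
      ultimately show ?thesis by (simp add: algebra_simps)
    qed
    have kapk1: "\<kappa> ^ Suc k \<le> \<kappa> ^ k * exp (- K * W)"
      using kb kk by (simp add: mult_left_mono mult.commute)
    have old: "z g (tk + W) \<le> M - \<kappa> ^ Suc k * M" if "g \<in> G" for g
      using weaken_bd[OF kapk1 M memb[OF that]] W by simp
    show ?case
    proof (cases "G = UNIV")
      case True
      then show ?thesis using old Suc.prems tk1 by (intro exI[of _ G]) auto
    next
      case False
      obtain i s1 where i: "i \<notin> G" "tk \<le> s1" "s1 + \<tau> \<le> tk + W"
        and arcs: "(\<exists>l. \<forall>r\<in>{s1<..<s1+\<tau>}. (Inr l, Inl i) \<in> \<sigma> r) \<or> (\<exists>k\<in>G. \<forall>r\<in>{s1<..<s1+\<tau>}. (Inl k, Inl i) \<in> \<sigma> r)"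
        using ac[unfolded act_def, rule_format, OF tk0 False] by (elim exE conjE) blast
      have s1E: "s1 + \<tau> \<le> E" using i tk1E by simp
      have s10: "t0 \<le> s1" using i tk0 by simp
      obtain \<delta>1 where d1: "z i (s1 + \<tau>) \<le> M - \<delta>1 * M" "0 \<le> \<delta>1" "\<delta>1 \<le> 1" "\<kappa> ^ Suc k \<le> \<delta>1 * exp (- K * W)"
      proof (cases "\<exists>l. \<forall>r\<in>{s1<..<s1+\<tau>}. (Inr l, Inl i) \<in> \<sigma> r")
        case True
        then obtain l where l: "\<forall>r\<in>{s1<..<s1+\<tau>}. (Inr l, Inl i) \<in> \<sigma> r" by blast
        have "z i (s1 + \<tau>) \<le> M - dL (s1 + \<tau> - s1) * M"
          by (rule lead[OF S _ M contr dhr allMr]) (use s10 s1E t l in auto)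
        moreover have "\<kappa> ^ Suc k \<le> dL \<tau> * exp (- K * W)"
        proof -
          have "\<kappa> ^ Suc k \<le> \<kappa>" using kb kk by (simp add: mult_left_le)
          also have "\<dots> \<le> exp (- 2 * K * W) * dL \<tau>" by (rule kb(3))
          also have "\<dots> \<le> exp (- K * W) * dL \<tau>"
            using K_pos W dL_bounds[OF t] by (intro mult_right_mono) auto
          finally show ?thesis by (simp add: mult.commute)
        qed
        ultimately show ?thesis using that[of "dL \<tau>"] dL_bounds[OF t] by auto
      next
        case False
        then obtain k' where k': "k' \<in> G" "\<forall>r\<in>{s1<..<s1+\<tau>}. (Inl k', Inl i) \<in> \<sigma> r" using arcs by blast
        define \<delta> where "\<delta> = \<kappa> ^ k * exp (- K * W)"
        have d0: "0 \<le> \<delta>" "\<delta> \<le> 1" unfolding \<delta>_def using kk K_pos W by (auto intro: mult_le_one)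
        have "z i (s1 + \<tau>) \<le> M - \<delta> * dF (s1 + \<tau> - s1) * M"
        proof (rule fol[OF S _ M contr dhr allMr _ d0, where k=k'])
          fix r assume r: "r \<in> {s1<..<s1 + \<tau>}"
          show "(Inl k', Inl i) \<in> \<sigma> r \<and> z k' r \<le> M - \<delta> * M"
            using k' r memb[of k' r] i unfolding \<delta>_def by auto
        qed (use s10 s1E t in auto)
        moreover have "\<kappa> ^ Suc k \<le> (\<delta> * dF \<tau>) * exp (- K * W)"
        proof -
          have "\<kappa> ^ Suc k = \<kappa> ^ k * \<kappa>" by simp
          also have "\<dots> \<le> \<kappa> ^ k * (exp (- 2 * K * W) * dF \<tau>)" using kb kk by (intro mult_left_mono) auto
          also have "\<dots> = (\<delta> * dF \<tau>) * exp (- K * W)"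
          proof -
            have "exp (- 2 * K * W) = exp (- K * W) * exp (- K * W)"
              by (subst mult_exp_exp) (rule arg_cong[where f=exp], simp)
            then show ?thesis unfolding \<delta>_def by (simp add: algebra_simps)
          qed
          finally show ?thesis .
        qed
        moreover have "0 \<le> \<delta> * dF \<tau>" "\<delta> * dF \<tau> \<le> 1" using d0 dF_bounds[OF t] by (auto intro: mult_le_one)
        ultimately show ?thesis using that[of "\<delta> * dF \<tau>"] by auto
      qed
      have "z i (tk + W) \<le> M - \<delta>1 * M * exp (- K * (tk + W - (s1 + \<tau>)))"
        using persr[of "s1 + \<tau>" "tk + W" i \<delta>1] d1 s10 t i tk1E by auto
      moreover have "\<delta>1 * M * exp (- K * W) \<le> \<delta>1 * M * exp (- K * (tk + W - (s1 + \<tau>)))"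
        using eKW[of "tk + W" "s1 + \<tau>"] i t d1 M by (intro mult_left_mono) auto
      ultimately have "z i (tk + W) \<le> M - (\<delta>1 * exp (- K * W)) * M" by (simp add: algebra_simps)
      then have newi: "z i (tk + W) \<le> M - \<kappa> ^ Suc k * M" by (rule weaken_bd[OF d1(4) M])
      show ?thesis
      proof (intro exI[of _ "insert i G"] conjI)
        show "Suc k \<le> card (insert i G)" using G(1) i(1) by simp
        show "\<forall>j\<in>insert i G. z j (t0 + real (Suc k) * W) \<le> M - \<kappa> ^ Suc k * M"
          using newi old tk1 by auto
      qed
    qed
  qed
  obtain G where G: "CARD('n) \<le> card G" "\<forall>i\<in>G. z i (t0 + real CARD('n) * W) \<le> M - \<kappa> ^ CARD('n) * M"
    using ind[of "CARD('n)"] by auto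
  have "G = UNIV" using G(1) by (metis card_seteq finite subset_UNIV)
  then show ?thesis using G(2) unfolding \<kappa>_def by auto
qed

end

lemma trancl_exit:
  assumes "(p, q) \<in> E\<^sup>+" "p \<in> X" "q \<notin> X"
  shows "\<exists>p' q'. (p', q') \<in> E \<and> p' \<in> X \<and> q' \<notin> X"
  using assms
proof (induction rule: trancl_induct)
  case (base y) then show ?case by blast
next
  case (step y z) then show ?case by (cases "y \<in> X") blast+
qed

locale dwell =
  fixes \<sigma> :: "real \<Rightarrow> 'g" and tauD :: real and ts :: "nat \<Rightarrow> real"
  assumes tauD: "tauD > 0" and ts0: "0 < ts 0" and tsgap: "\<And>m. ts m + tauD \<le> ts (Suc m)"
    and c0: "\<And>t. t \<in> {0..<ts 0} \<Longrightarrow> \<sigma> t = \<sigma> 0"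
    and cm: "\<And>m t. t \<in> {ts m..<ts (Suc m)} \<Longrightarrow> \<sigma> t = \<sigma> (ts m)"
begin

lemma ts_ge: "ts m \<ge> ts 0 + real m * tauD"
proof (induction m)
  case (Suc m) then show ?case using tsgap[of m] by (simp add: algebra_simps)
qed simp

lemma ts_mono: "m \<le> m' \<Longrightarrow> ts m \<le> ts m'"
proof (induction m' rule: dec_induct)
  case (step n) then show ?case using tsgap[of n] tauD by simp
qed simp

lemma ts_strict: "m < m' \<Longrightarrow> ts m < ts m'"
  using ts_mono[of "Suc m" m'] tsgap[of m] tauD by simp

lemma piece: assumes "r \<ge> 0" shows "r < ts 0 \<or> (\<exists>m. ts m \<le> r \<and> r < ts (Suc m))"
proof (cases "r < ts 0")
  case False
  obtain N :: nat where N: "r / tauD < real N" using reals_Archimedean2 by blast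
  have "r < ts N" using ts_ge[of N] N tauD ts0 by (simp add: field_simps)
  then have ex: "\<exists>m. r < ts m" by blast
  define m where "m = (LEAST m. r < ts m)"
  have m: "r < ts m" unfolding m_def using LeastI_ex[OF ex] .
  have "m \<noteq> 0" using False m by (cases m) auto
  then obtain m' where m': "m = Suc m'" by (cases m) auto
  have "\<not> r < ts m'" using not_less_Least[of m' "\<lambda>m. r < ts m"] m' unfolding m_def by auto
  then show ?thesis using m m' by force
qed simp

lemma finite_sw: "finite (ts ` {m. ts m \<le> b})"
proof -
  obtain N :: nat where N: "b / tauD < real N" using reals_Archimedean2 by blast
  have "{m. ts m \<le> b} \<subseteq> {..<N}"
  proof
    fix m assume "m \<in> {m. ts m \<le> b}"
    then have "ts 0 + real m * tauD \<le> b" using ts_ge[of m] by simp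
    moreover have "b < real N * tauD" using N tauD by (simp add: field_simps)
    ultimately have "real m * tauD < real N * tauD" using ts0 by linarith
    then show "m \<in> {..<N}" using tauD by simp
  qed
  then show ?thesis by (meson finite_imageI finite_lessThan finite_subset)
qed

lemma local_const:
  assumes r: "r > 0" "r \<notin> range ts"
  shows "\<exists>\<delta>>0. \<forall>r'. \<bar>r' - r\<bar> < \<delta> \<longrightarrow> \<sigma> r' = \<sigma> r"
proof -
  from piece[of r] r consider "r < ts 0" | m where "ts m \<le> r" "r < ts (Suc m)" by force
  then show ?thesis
  proof cases
    case 1
    show ?thesis
      by (intro exI[of _ "min r (ts 0 - r)"]) (use 1 r in \<open>auto intro!: trans[OF c0 c0[symmetric]] simp: abs_less_iff\<close>)
  next
    case 2
    then have h: "ts m \<le> r" "r < ts (Suc m)" .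
    have "ts m \<noteq> r" using r by auto
    then have lt: "ts m < r" using h by simp
    show ?thesis
    proof (intro exI[of _ "min (r - ts m) (ts (Suc m) - r)"] conjI allI impI)
      show "0 < min (r - ts m) (ts (Suc m) - r)" using lt h by simp
      fix r' assume "\<bar>r' - r\<bar> < min (r - ts m) (ts (Suc m) - r)"
      then have "r' \<in> {ts m..<ts (Suc m)}" by (auto simp: abs_less_iff)
      then show "\<sigma> r' = \<sigma> r" using cm[of r' m] cm[of r m] h by simp
    qed
  qed
qed

lemma dwell_interval:
  assumes t: "t \<ge> 0" and r: "r \<ge> t + tauD"
  shows "\<exists>s1. t \<le> s1 \<and> s1 \<le> r \<and> (\<forall>r'\<in>{s1..<s1+tauD}. \<sigma> r' = \<sigma> r)"
proof -
  have r0: "r \<ge> 0" using t r tauD by simp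
  from piece[OF r0] consider "r < ts 0" | m where "ts m \<le> r" "r < ts (Suc m)" by blast
  then show ?thesis
  proof cases
    case 1
    show ?thesis
      by (intro exI[of _ t]) (use 1 t r tauD in \<open>auto intro!: trans[OF c0 c0[symmetric]]\<close>)
  next
    case 2
    then have h: "ts m \<le> r" "r < ts (Suc m)" .
    show ?thesis
    proof (cases "ts m \<ge> t")
      case True
      show ?thesis
        by (intro exI[of _ "ts m"]) (use 2 True tsgap[of m] in \<open>auto intro!: trans[OF cm cm[symmetric]]\<close>)
    next
      case False
      show ?thesis
      proof (intro exI[of _ t] conjI ballI)
        show "t \<le> t" "t \<le> r" using r tauD by auto
        fix r' assume "r' \<in> {t..<t + tauD}"
        then have "r' \<in> {ts m..<ts (Suc m)}" using h False r by auto
        then show "\<sigma> r' = \<sigma> r" using cm[of r' m] cm[of r m] h by simp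
      qed
    qed
  qed
qed

end

lemma dwellI: assumes "dwell_time_signal \<sigma> tauD" shows "\<exists>ts. dwell \<sigma> tauD ts"
  using assms unfolding dwell_time_signal_def dwell_def by blast

lemma (in wbounds) act_from:
  fixes \<sigma> :: "real \<Rightarrow> ('n, 'k) digraph"
  assumes dw: "dwell \<sigma> tauD ts" and T: "T > 0"
    and conn: "\<forall>t\<ge>0. L_connected (joint_graph \<sigma> t (t + T))" and t0: "t0 \<ge> 0"
  shows "act \<sigma> tauD (T + 2 * tauD) t0"
  unfolding act_def
proof (intro allI impI)
  fix t :: real and G :: "'n set" assume t: "t0 \<le> t" and G: "G \<noteq> UNIV"
  interpret dwell \<sigma> tauD ts by (rule dw)
  obtain i0 where i0: "i0 \<notin> G" using G by blast
  define E where "E = joint_graph \<sigma> (t + tauD) (t + tauD + T)"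
  have "t + tauD \<ge> 0" using t t0 tauD by simp
  then have "L_connected E" unfolding E_def using conn by blast
  then obtain j where "(Inr j, Inl i0) \<in> E\<^sup>+" unfolding L_connected_def by blast
  moreover define X :: "('n + 'k) set" where "X = range Inr \<union> Inl ` G"
  ultimately obtain p q where pq: "(p, q) \<in> E" "p \<in> X" "q \<notin> X"
  proof -
    have "Inr j \<in> X" "Inl i0 \<notin> X" using i0 unfolding X_def by auto
    then show ?thesis using trancl_exit[of "Inr j" "Inl i0" E X] \<open>(Inr j, Inl i0) \<in> E\<^sup>+\<close> that by blast
  qed
  obtain i where qi: "q = Inl i" "i \<notin> G" using pq(3) unfolding X_def by (cases q) auto
  obtain r where r: "r \<in> {t + tauD..<t + tauD + T}" "(p, q) \<in> \<sigma> r"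
    using pq(1) unfolding E_def joint_graph_def by blast
  obtain s1 where s1: "t \<le> s1" "s1 \<le> r" "\<forall>r'\<in>{s1..<s1+tauD}. \<sigma> r' = \<sigma> r"
    using dwell_interval[of t r] t t0 r(1) by auto
  have act: "(p, Inl i) \<in> \<sigma> r'" if "r' \<in> {s1<..<s1+tauD}" for r'
    using s1(3) that r(2) qi by auto
  show "\<exists>i. i \<notin> G \<and> (\<exists>s1. t \<le> s1 \<and> s1 + tauD \<le> t + (T + 2 * tauD) \<and>
      ((\<exists>l. \<forall>r\<in>{s1<..<s1 + tauD}. (Inr l, Inl i) \<in> \<sigma> r) \<or> (\<exists>k\<in>G. \<forall>r\<in>{s1<..<s1 + tauD}. (Inl k, Inl i) \<in> \<sigma> r)))"
  proof (intro exI[of _ i] conjI exI[of _ s1])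
    show "i \<notin> G" by fact
    show "t \<le> s1" by fact
    show "s1 + tauD \<le> t + (T + 2 * tauD)" using s1 r by auto
    show "(\<exists>l. \<forall>r\<in>{s1<..<s1 + tauD}. (Inr l, Inl i) \<in> \<sigma> r) \<or> (\<exists>k\<in>G. \<forall>r\<in>{s1<..<s1 + tauD}. (Inl k, Inl i) \<in> \<sigma> r)"
    proof -
      from pq(2) consider l where "p = Inr l" | k where "p = Inl k" "k \<in> G" unfolding X_def by blast
      then show ?thesis
      proof cases
        case 1 then show ?thesis using act by blast
      next
        case 2 then show ?thesis using act by blast
      qed
    qed
  qed
qed

lemma hull_closed_ne:
  fixes y :: "real^'d^'k::finite"
  shows "closed (convex hull (range (\<lambda>j. y $ j)))" "convex hull (range (\<lambda>j. y $ j)) \<noteq> {}"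
    "convex (convex hull (range (\<lambda>j. y $ j)))"
proof -
  have "compact (convex hull (range (\<lambda>j. y $ j)))"
    by (intro compact_convex_hull finite_imp_compact) simp
  then show "closed (convex hull (range (\<lambda>j. y $ j)))" by (rule compact_imp_closed)
  show "convex hull (range (\<lambda>j. y $ j)) \<noteq> {}" by simp
  show "convex (convex hull (range (\<lambda>j. y $ j)))" by simp
qed

lemma hull_inner_le:
  fixes y :: "real^'d^'k::finite"
  assumes "p \<in> convex hull (range (\<lambda>j. y $ j))"
  shows "inner e p \<le> (MAX j. inner e (y $ j))"
proof -
  have "convex hull (range (\<lambda>j. y $ j)) \<subseteq> {q. inner e q \<le> (MAX j. inner e (y $ j))}"
    by (intro hull_minimal) (auto simp: convex_halfspace_le)
  then show ?thesis using assms by auto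
qed

lemma G1:
  fixes y :: "real^'d^'k::finite"
  assumes e: "norm e = 1"
  shows "inner e v - (MAX j. inner e (y $ j)) \<le> infdist v (convex hull (range (\<lambda>j. y $ j)))"
proof -
  note H = hull_closed_ne[of y]
  obtain p where p: "p \<in> convex hull (range (\<lambda>j. y $ j))" "infdist v (convex hull (range (\<lambda>j. y $ j))) = dist v p"
    using infdist_attains_inf[OF H(1) H(2)] by blast
  have "inner e v - (MAX j. inner e (y $ j)) \<le> inner e v - inner e p"
    using hull_inner_le[OF p(1), of e] by linarith
  also have "\<dots> = inner e (v - p)" by (simp add: inner_diff_right)
  also have "\<dots> \<le> norm e * norm (v - p)" by (rule norm_cauchy_schwarz)
  also have "\<dots> = dist v p" using e by (simp add: dist_norm)
  finally show ?thesis using p(2) by simp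
qed

lemma G2:
  fixes y :: "real^'d^'k::finite" and v :: "real^'d"
  shows "\<exists>e. norm e = 1 \<and> infdist v (convex hull (range (\<lambda>j. y $ j))) \<le> max 0 (inner e v - (MAX j. inner e (y $ j)))"
proof -
  note H = hull_closed_ne[of y]
  let ?K = "convex hull (range (\<lambda>j. y $ j))"
  obtain p where p: "p \<in> ?K" "infdist v ?K = dist v p"
    using infdist_attains_inf[OF H(1) H(2)] by blast
  show ?thesis
  proof (cases "v = p")
    case True
    obtain i :: 'd where True by simp
    show ?thesis using p True by (intro exI[of _ "axis i 1"]) (auto simp: norm_axis_1)
  next
    case False
    define d where "d = dist v p"
    have d: "d > 0" using False unfolding d_def by simp
    define e where "e = (1 / d) *\<^sub>R (v - p)"
    have ne: "norm e = 1" unfolding e_def d_def using d[unfolded d_def] by (simp add: dist_norm)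
    have close: "\<forall>z\<in>?K. dist v p \<le> dist v z" using p infdist_le by metis
    have "inner e (y $ j) \<le> inner e p" for j
    proof -
      have "inner (v - p) (y $ j - p) \<le> 0"
        by (rule any_closest_point_dot[OF H(3) H(1) p(1) _ close]) (simp add: hull_inc)
      then have "inner e (y $ j - p) \<le> 0" unfolding e_def using d by (simp add: divide_nonpos_pos)
      then show ?thesis by (simp add: inner_diff_right)
    qed
    then have mx: "(MAX j. inner e (y $ j)) \<le> inner e p" by simp
    have "inner e v - inner e p = d"
    proof -
      have "inner e v - inner e p = inner e (v - p)" by (simp add: inner_diff_right)
      also have "\<dots> = (1 / d) * (norm (v - p))\<^sup>2" unfolding e_def by (simp add: power2_norm_eq_inner)
      also have "\<dots> = d" unfolding d_def using d[unfolded d_def] by (simp add: dist_norm power2_eq_square)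
      finally show ?thesis .
    qed
    then have "infdist v ?K \<le> inner e v - (MAX j. inner e (y $ j))" using mx p(2) unfolding d_def by linarith
    then show ?thesis using ne by (intro exI[of _ e]) auto
  qed
qed

lemma nn_fin_integrable:
  fixes g :: "real \<Rightarrow> real"
  assumes meas: "g \<in> borel_measurable (lebesgue_on {0..t})" and nonneg: "\<And>s. 0 \<le> g s" and C: "C \<ge> 1"
    and fin: "(\<integral>\<^sup>+ s\<in>{0..t}. ennreal (C * g s) \<partial>lborel) < \<infinity>"
  shows "g integrable_on {0..t} \<and> (\<integral>\<^sup>+ s\<in>{0..t}. ennreal (C * g s) \<partial>lborel) = ennreal (integral {0..t} (\<lambda>s. C * g s))"
proof -
  have eq: "(\<integral>\<^sup>+ s\<in>{0..t}. ennreal (C * g s) \<partial>lborel) = (\<integral>\<^sup>+ s. ennreal (C * g s) \<partial>lebesgue_on {0..t})"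
  proof -
    have "(\<integral>\<^sup>+ s\<in>{0..t}. ennreal (C * g s) \<partial>lborel) = (\<integral>\<^sup>+ s\<in>{0..t}. ennreal (C * g s) \<partial>lebesgue)"
      by (simp add: nn_integral_completion)
    also have "\<dots> = (\<integral>\<^sup>+ s. ennreal (C * g s) \<partial>lebesgue_on {0..t})"
      by (simp add: nn_integral_restrict_space)
    finally show ?thesis .
  qed
  have "(\<integral>\<^sup>+ s. ennreal (norm (g s)) \<partial>lebesgue_on {0..t}) \<le> (\<integral>\<^sup>+ s. ennreal (C * g s) \<partial>lebesgue_on {0..t})"
  proof (rule nn_integral_mono)
    fix s
    have "g s \<le> C * g s" using C nonneg[of s] mult_right_mono[of 1 C "g s"] by simp
    then show "ennreal (norm (g s)) \<le> ennreal (C * g s)" using nonneg[of s] by (simp add: ennreal_leI)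
  qed
  then have "(\<integral>\<^sup>+ s. ennreal (norm (g s)) \<partial>lebesgue_on {0..t}) < \<infinity>" using fin eq by simp
  then have "integrable (lebesgue_on {0..t}) g" using meas by (simp add: integrable_iff_bounded)
  then have gi: "g integrable_on {0..t}" by (intro integrable_on_lebesgue_on) auto
  then have "((\<lambda>s. C * g s) has_integral integral {0..t} (\<lambda>s. C * g s)) {0..t}"
    using integrable_cmul[OF gi, of C] by (intro integrable_integral) simp
  then have "(\<integral>\<^sup>+ s. ennreal (C * g s) * indicator {0..t} s \<partial>lborel) = ennreal (integral {0..t} (\<lambda>s. C * g s))"
    using C nonneg by (intro nn_integral_has_integral_lebesgue') auto
  then show ?thesis using gi by simp
qed

definition rhsF ::
  "('n::finite, 'k::finite) digraph
   \<Rightarrow> ('n \<Rightarrow> 'n \<Rightarrow> real^'d^'n \<Rightarrow> real^'d^'k \<Rightarrow> real \<Rightarrow> real)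
   \<Rightarrow> ('n \<Rightarrow> 'k \<Rightarrow> real^'d^'n \<Rightarrow> real^'d^'k \<Rightarrow> real \<Rightarrow> real)
   \<Rightarrow> ('n \<Rightarrow> real \<Rightarrow> real^'d) \<Rightarrow> 'n \<Rightarrow> real^'d^'n \<Rightarrow> real^'d^'k \<Rightarrow> real \<Rightarrow> real^'d" where
  "rhsF E a b w i x y t =
     (\<Sum>j \<in> {j. (Inl j, Inl i) \<in> E}. a i j x y t *\<^sub>R (x $ j - x $ i))
   + (\<Sum>j \<in> {j. (Inr j, Inl i) \<in> E}. b i j x y t *\<^sub>R (y $ j - x $ i))
   + w i t"

lemma follower_rhsF: "follower_rhs \<sigma> a b w i x y t = rhsF (\<sigma> t) a b w i x y t"
  unfolding follower_rhs_def rhsF_def by simp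

locale sys = dwell \<sigma> tauD ts for \<sigma> :: "real \<Rightarrow> ('n::finite, 'k::finite) digraph" and tauD ts +
  fixes a :: "'n \<Rightarrow> 'n \<Rightarrow> real^'d^'n \<Rightarrow> real^'d^'k \<Rightarrow> real \<Rightarrow> real"
    and b :: "'n \<Rightarrow> 'k \<Rightarrow> real^'d^'n \<Rightarrow> real^'d^'k \<Rightarrow> real \<Rightarrow> real"
    and u :: "'k \<Rightarrow> real^'d^'k \<Rightarrow> real \<Rightarrow> real^'d" and w :: "'n \<Rightarrow> real \<Rightarrow> real^'d"
    and x :: "real \<Rightarrow> real^'d^'n" and y :: "real \<Rightarrow> real^'d^'k"
  assumes a_cont: "\<And>i j. continuous_on UNIV (\<lambda>(x, y, t). a i j x y t)"
    and b_cont: "\<And>i j. continuous_on UNIV (\<lambda>(x, y, t). b i j x y t)"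
    and w_cont: "\<And>i. continuous_on UNIV (w i)"
    and sol: "is_solution5 \<sigma> a b u w x y"
begin

abbreviation "rhs i s \<equiv> follower_rhs \<sigma> a b w i (x s) (y s) s"
abbreviation "ul j s \<equiv> u j (y s) s"

lemma x_int: "t \<ge> 0 \<Longrightarrow> ((\<lambda>s. rhs i s) has_integral (x t $ i - x 0 $ i)) {0..t}"
  using sol unfolding is_solution5_def by blast

lemma y_int: "t \<ge> 0 \<Longrightarrow> ((\<lambda>s. ul j s) has_integral (y t $ j - y 0 $ j)) {0..t}"
  using sol unfolding is_solution5_def by blast

lemma x_eq: "t \<ge> 0 \<Longrightarrow> x t $ i = x 0 $ i + integral {0..t} (\<lambda>s. rhs i s)"
  using integral_unique[OF x_int] by simp

lemma y_eq: "t \<ge> 0 \<Longrightarrow> y t $ j = y 0 $ j + integral {0..t} (\<lambda>s. ul j s)"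
  using integral_unique[OF y_int] by simp

lemma x_comp_cont: "continuous_on {0..T} (\<lambda>s. x s $ i)"
proof (cases "T \<ge> 0")
  case True
  have "continuous_on {0..T} (\<lambda>s. x 0 $ i + integral {0..s} (\<lambda>s. rhs i s))"
    using indefinite_integral_continuous_1[OF has_integral_integrable[OF x_int[OF True]]]
    by (intro continuous_intros)
  moreover have "x 0 $ i + integral {0..s} (\<lambda>s. rhs i s) = x s $ i" if "s \<in> {0..T}" for s
    using x_eq[of s i] that by simp
  ultimately show ?thesis by (rule continuous_on_eq)
qed simp

lemma y_comp_cont: "continuous_on {0..T} (\<lambda>s. y s $ j)"
proof (cases "T \<ge> 0")
  case True
  have "continuous_on {0..T} (\<lambda>s. y 0 $ j + integral {0..s} (\<lambda>s. ul j s))"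
    using indefinite_integral_continuous_1[OF has_integral_integrable[OF y_int[OF True]]]
    by (intro continuous_intros)
  moreover have "y 0 $ j + integral {0..s} (\<lambda>s. ul j s) = y s $ j" if "s \<in> {0..T}" for s
    using y_eq[of s j] that by simp
  ultimately show ?thesis by (rule continuous_on_eq)
qed simp

lemma x_cont: "continuous_on {0..T} x"
proof -
  have "continuous_on {0..T} (\<lambda>s. \<chi> i. x s $ i)" by (intro continuous_on_vec_lambda x_comp_cont)
  then show ?thesis by simp
qed

lemma y_cont: "continuous_on {0..T} y"
proof -
  have "continuous_on {0..T} (\<lambda>s. \<chi> j. y s $ j)" by (intro continuous_on_vec_lambda y_comp_cont)
  then show ?thesis by simp
qed

lemma coef_cont:
  assumes "S \<subseteq> {0..T}"
  shows "continuous_on S (\<lambda>s. a i j (x s) (y s) s)" "continuous_on S (\<lambda>s. b i l (x s) (y s) s)"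
proof -
  have tr: "continuous_on S (\<lambda>s. (x s, y s, s))"
    using continuous_on_subset[OF x_cont assms] continuous_on_subset[OF y_cont assms]
    by (intro continuous_intros)
  show "continuous_on S (\<lambda>s. a i j (x s) (y s) s)"
    using continuous_on_compose2[OF a_cont[of i j] tr] by simp
  show "continuous_on S (\<lambda>s. b i l (x s) (y s) s)"
    using continuous_on_compose2[OF b_cont[of i l] tr] by simp
qed

lemma rhsF_cont:
  assumes "S \<subseteq> {0..T}"
  shows "continuous_on S (\<lambda>s. rhsF E a b w i (x s) (y s) s)"
  unfolding rhsF_def
  using continuous_on_subset[OF x_cont assms] continuous_on_subset[OF y_cont assms]
    coef_cont[OF assms] continuous_on_subset[OF w_cont[of i], of S]
  by (intro continuous_intros) auto

lemma x_incr:
  assumes "0 \<le> c" "c \<le> s"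
  shows "x s $ i - x c $ i = integral {c..s} (\<lambda>s. rhs i s)"
proof -
  have "integral {0..c} (\<lambda>s. rhs i s) + integral {c..s} (\<lambda>s. rhs i s) = integral {0..s} (\<lambda>s. rhs i s)"
    using assms by (intro Henstock_Kurzweil_Integration.integral_combine has_integral_integrable[OF x_int]) auto
  then have e: "integral {0..s} (\<lambda>s. rhs i s) = integral {0..c} (\<lambda>s. rhs i s) + integral {c..s} (\<lambda>s. rhs i s)" by simp
  show ?thesis using x_eq[of s i] x_eq[of c i] assms unfolding e by (simp add: algebra_simps)
qed

lemma y_incr:
  assumes "0 \<le> c" "c \<le> s"
  shows "y s $ j - y c $ j = integral {c..s} (\<lambda>s. ul j s)"
proof -
  have "integral {0..c} (\<lambda>s. ul j s) + integral {c..s} (\<lambda>s. ul j s) = integral {0..s} (\<lambda>s. ul j s)"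
    using assms by (intro Henstock_Kurzweil_Integration.integral_combine has_integral_integrable[OF y_int]) auto
  then have e: "integral {0..s} (\<lambda>s. ul j s) = integral {0..c} (\<lambda>s. ul j s) + integral {c..s} (\<lambda>s. ul j s)" by simp
  show ?thesis using y_eq[of s j] y_eq[of c j] assms unfolding e by (simp add: algebra_simps)
qed

lemma x_deriv:
  assumes r: "r > 0" "r \<notin> range ts"
  shows "((\<lambda>s. x s $ i) has_vector_derivative rhs i r) (at r)"
proof -
  obtain \<delta> where \<delta>: "\<delta> > 0" "\<forall>r'. \<bar>r' - r\<bar> < \<delta> \<longrightarrow> \<sigma> r' = \<sigma> r" using local_const[OF r] by blast
  define c where "c = r - min \<delta> r / 2"
  define d where "d = r + \<delta> / 2"
  have cd: "0 < c" "c < r" "r < d" unfolding c_def d_def using \<delta> r by auto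
  have sig: "\<sigma> s = \<sigma> r" if "s \<in> {c..d}" for s
  proof -
    have "\<bar>s - r\<bar> < \<delta>" using that \<delta>(1) r unfolding c_def d_def by (auto simp: abs_less_iff)
    then show ?thesis using \<delta>(2) by blast
  qed
  define F where "F s = rhsF (\<sigma> r) a b w i (x s) (y s) s" for s
  have Fc: "continuous_on {c..d} F" unfolding F_def by (rule rhsF_cont[of _ d]) (use cd in auto)
  have eqF: "rhs i s = F s" if "s \<in> {c..d}" for s unfolding F_def follower_rhsF sig[OF that] ..
  have I: "((\<lambda>u. integral {c..u} F) has_vector_derivative F r) (at r within {c..d})"
    using integral_has_vector_derivative[OF Fc, of r] cd by auto
  have "((\<lambda>s. x c $ i + integral {c..s} F) has_vector_derivative (0 + F r)) (at r within {c..d})"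
    by (rule has_vector_derivative_add[OF has_vector_derivative_const I])
  then have "((\<lambda>s. x c $ i + integral {c..s} F) has_vector_derivative F r) (at r within {c..d})" by simp
  moreover have "at r within {c..d} = at r" by (rule at_within_interior) (use cd in simp)
  ultimately have D: "((\<lambda>s. x c $ i + integral {c..s} F) has_vector_derivative F r) (at r)"
    by metis
  have xe: "x s $ i = x c $ i + integral {c..s} F" if "s \<in> {c<..<d}" for s
  proof -
    have "x s $ i - x c $ i = integral {c..s} (\<lambda>s. rhs i s)" using x_incr[of c s i] cd that by auto
    also have "\<dots> = integral {c..s} F" using that by (intro integral_cong eqF) auto
    finally show ?thesis by (simp add: algebra_simps)
  qed
  have "((\<lambda>s. x s $ i) has_vector_derivative F r) (at r)"
    by (rule has_vector_derivative_transform_within_open[OF D, of "{c<..<d}"]) (use cd xe in auto)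
  then show ?thesis using eqF[of r] cd by simp
qed

end

definition Wf :: "('n::finite \<Rightarrow> real \<Rightarrow> real^'d) \<Rightarrow> real \<Rightarrow> real \<Rightarrow> real" where
  "Wf w t0 s = integral {t0..s} (\<lambda>r. \<Sum>l\<in>UNIV. norm (w l r))"

locale sys2 = sys \<sigma> tauD ts a b u w x y for \<sigma> :: "real \<Rightarrow> ('n::finite, 'k::finite) digraph" and tauD ts a b u w
   and x :: "real \<Rightarrow> real^'d^'n" and y +
  fixes alo ahi blo :: real
  assumes alo: "0 < alo" and aloahi: "alo \<le> ahi" and blo: "0 < blo"
    and abnd: "\<And>i j x y t. alo \<le> a i j x y t \<and> a i j x y t \<le> ahi"
    and bbnd: "\<And>i j x y t. blo \<le> b i j x y t"
begin

sublocale W: wbounds "\<lambda>i j r. a i j (x r) (y r) r" "\<lambda>i l r. b i l (x r) (y r) r" alo ahi blo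
  by unfold_locales (use alo aloahi blo abnd bbnd in auto)

lemma wsum_cont: "continuous_on S (\<lambda>r. \<Sum>l\<in>UNIV. norm (w l r))"
  using w_cont by (intro continuous_intros) (auto intro: continuous_on_subset)

lemma Wf_nonneg: "t0 \<le> s \<Longrightarrow> 0 \<le> Wf w t0 s"
  unfolding Wf_def by (intro integral_nonneg integrable_continuous_real wsum_cont) (auto intro: sum_nonneg)

lemma Wf_deriv:
  assumes "t0 < r" "r < t1"
  shows "((\<lambda>s. Wf w t0 s) has_real_derivative (\<Sum>l\<in>UNIV. norm (w l r))) (at r)"
proof -
  have "((\<lambda>s. Wf w t0 s) has_vector_derivative (\<Sum>l\<in>UNIV. norm (w l r))) (at r within {t0..t1})"
    unfolding Wf_def using assms by (intro integral_has_vector_derivative wsum_cont) auto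
  moreover have "at r within {t0..t1} = at r" by (rule at_within_interior) (use assms in simp)
  ultimately show ?thesis by (metis has_real_derivative_iff_has_vector_derivative)
qed

lemma Wf_cont: "continuous_on {t0..t1} (\<lambda>s. Wf w t0 s)"
  unfolding Wf_def by (intro indefinite_integral_continuous_1 integrable_continuous_real wsum_cont)

definition "zet e Zu t0 i s = inner e (x s $ i) - (MAX j. inner e (y t0 $ j)) - Zu - Wf w t0 s"

lemma zet_cont:
  assumes "0 \<le> t0"
  shows "continuous_on {t0..t1} (zet e Zu t0 i)"
proof -
  have "continuous_on {t0..t1} (\<lambda>s. x s $ i)"
    using x_comp_cont[of t1 i] assms by (auto elim: continuous_on_subset)
  then show ?thesis unfolding zet_def using Wf_cont[of t0 t1]
    by (intro continuous_on_diff continuous_on_inner continuous_on_const) auto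
qed

lemma zet_dhyp:
  fixes e :: "real^'d"
  assumes t0: "0 \<le> t0" and e: "norm e = 1"
    and Hy: "\<And>j s. s \<in> {t0..t1} \<Longrightarrow> norm (y s $ j - y t0 $ j) \<le> Zu"
  shows "W.dhyp \<sigma> (zet e Zu t0) (ts ` {m. ts m \<le> t1}) t0 t1"
  unfolding W.dhyp_def
proof (intro allI ballI)
  fix i r assume r: "r \<in> {t0<..<t1} - ts ` {m. ts m \<le> t1}"
  have r0: "r > 0" "r \<notin> range ts" using r t0 by auto
  let ?cm = "MAX j. inner e (y t0 $ j)"
  let ?g = "\<Sum>l\<in>UNIV. norm (w l r)"
  have dx: "((\<lambda>s. inner e (x s $ i)) has_vector_derivative inner e (rhs i r)) (at r)"
    by (rule bounded_linear.has_vector_derivative[OF bounded_linear_inner_right x_deriv[OF r0]])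
  have dz: "(zet e Zu t0 i has_real_derivative (inner e (rhs i r) - ?g)) (at r)"
  proof -
    have "((\<lambda>s. inner e (x s $ i) - ?cm - Zu - Wf w t0 s) has_real_derivative (inner e (rhs i r) - 0 - 0 - ?g)) (at r)"
      using dx Wf_deriv[of t0 r t1] r
      by (intro DERIV_diff DERIV_const) (auto simp: has_real_derivative_iff_has_vector_derivative)
    then show ?thesis unfolding zet_def[abs_def] by simp
  qed
  let ?A = "{j. (Inl j, Inl i) \<in> \<sigma> r}" and ?B = "{j. (Inr j, Inl i) \<in> \<sigma> r}"
  have expand: "inner e (rhs i r) = (\<Sum>j\<in>?A. a i j (x r) (y r) r * (zet e Zu t0 j r - zet e Zu t0 i r))
      + (\<Sum>j\<in>?B. b i j (x r) (y r) r * (inner e (y r $ j) - inner e (x r $ i))) + inner e (w i r)"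
    unfolding follower_rhs_def zet_def by (simp add: inner_sum_right inner_add_right inner_diff_right)
  have yb: "inner e (y r $ j) - inner e (x r $ i) \<le> - zet e Zu t0 i r" for j
  proof -
    have "inner e (y r $ j) - inner e (y t0 $ j) = inner e (y r $ j - y t0 $ j)" by (simp add: inner_diff_right)
    also have "\<dots> \<le> norm e * norm (y r $ j - y t0 $ j)" by (rule norm_cauchy_schwarz)
    also have "\<dots> \<le> Zu" using Hy[of r j] r e by auto
    finally have "inner e (y r $ j) \<le> inner e (y t0 $ j) + Zu" by simp
    moreover have "inner e (y t0 $ j) \<le> ?cm" by simp
    moreover have "0 \<le> Wf w t0 r" using Wf_nonneg r by auto
    ultimately show ?thesis unfolding zet_def by linarith
  qed
  have Bs: "(\<Sum>j\<in>?B. b i j (x r) (y r) r * (inner e (y r $ j) - inner e (x r $ i)))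
      \<le> - (\<Sum>j\<in>?B. b i j (x r) (y r) r) * zet e Zu t0 i r"
  proof -
    have "(\<Sum>j\<in>?B. b i j (x r) (y r) r * (inner e (y r $ j) - inner e (x r $ i)))
       \<le> (\<Sum>j\<in>?B. b i j (x r) (y r) r * (- zet e Zu t0 i r))"
      using yb bbnd blo by (intro sum_mono mult_left_mono) (auto intro: order.trans[OF less_imp_le])
    then show ?thesis by (simp add: sum_distrib_right sum_negf)
  qed
  have ww: "inner e (w i r) \<le> ?g"
  proof -
    have "inner e (w i r) \<le> norm e * norm (w i r)" by (rule norm_cauchy_schwarz)
    also have "\<dots> = norm (w i r)" using e by simp
    also have "\<dots> \<le> ?g" by (rule member_le_sum) auto
    finally show ?thesis .
  qed
  have "inner e (rhs i r) - ?g \<le> Dfun \<sigma> (\<lambda>i j r. a i j (x r) (y r) r) (\<lambda>i l r. b i l (x r) (y r) r) (zet e Zu t0) i r"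
    unfolding Dfun_def using expand Bs ww by linarith
  then show "\<exists>d. (zet e Zu t0 i has_real_derivative d) (at r) \<and> d \<le> Dfun \<sigma> (\<lambda>i j r. a i j (x r) (y r) r) (\<lambda>i l r. b i l (x r) (y r) r) (zet e Zu t0) i r"
    using dz by blast
qed

end

lemma hull_dist_nonneg: "0 \<le> hull_dist (x :: real^'d^'n::finite) (y :: real^'d^'k::finite)"
proof -
  obtain i :: 'n where True by simp
  have "0 \<le> infdist (x $ i) (convex hull (range (\<lambda>j. y $ j)))" by (rule infdist_nonneg)
  also have "\<dots> \<le> hull_dist x y" unfolding hull_dist_def by (rule Max_ge) auto
  finally show ?thesis .
qed

lemma hull_dist_ge: "infdist (x $ i) (convex hull (range (\<lambda>j. y $ j))) \<le> hull_dist (x :: real^'d^'n::finite) (y :: real^'d^'k::finite)"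
  unfolding hull_dist_def by (rule Max_ge) auto

lemma hd_bound:
  fixes v :: "real^'d^'n::finite" and yy :: "real^'d^'k::finite"
  assumes B: "0 \<le> B" and H: "\<And>e i. norm e = 1 \<Longrightarrow> inner e (v $ i) - (MAX j. inner e (yy $ j)) \<le> B"
  shows "hull_dist v yy \<le> B"
  unfolding hull_dist_def
proof (rule Max.boundedI)
  show "finite (range (\<lambda>i. infdist (v $ i) (convex hull range (($) yy))))" by simp
  show "range (\<lambda>i. infdist (v $ i) (convex hull range (($) yy))) \<noteq> {}" by simp
  fix a assume "a \<in> range (\<lambda>i. infdist (v $ i) (convex hull range (($) yy)))"
  then obtain i where a: "a = infdist (v $ i) (convex hull range (($) yy))" by blast
  obtain e where e: "norm e = 1" "a \<le> max 0 (inner e (v $ i) - (MAX j. inner e (yy $ j)))"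
    using G2[where y=yy and v="v $ i"] a by auto
  then show "a \<le> B" using H[OF e(1), of i] B by linarith
qed

context sys2 begin

lemma window_core:
  fixes e :: "real^'d"
  assumes t0: "0 \<le> t0" "t0 \<le> t1" and e: "norm e = 1" and Zu: "0 \<le> Zu"
    and Hy: "\<And>j s. s \<in> {t0..t1} \<Longrightarrow> norm (y s $ j - y t0 $ j) \<le> Zu"
    and zb: "zet e Zu t0 i s \<le> Bd" and s: "s \<in> {t0..t1}"
  shows "inner e (x s $ i) - (MAX j. inner e (y s $ j)) \<le> Bd + 2 * Zu + Wf w t0 s"
proof -
  let ?cm = "MAX j. inner e (y t0 $ j)"
  have "?cm \<in> range (\<lambda>j. inner e (y t0 $ j))" by (rule Max_in) auto
  then obtain j0 where j0: "?cm = inner e (y t0 $ j0)" by (metis (no_types, lifting) rangeE)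
  have "inner e (y t0 $ j0) - inner e (y s $ j0) = inner e (y t0 $ j0 - y s $ j0)" by (simp add: inner_diff_right)
  also have "\<dots> \<le> norm e * norm (y t0 $ j0 - y s $ j0)" by (rule norm_cauchy_schwarz)
  also have "\<dots> \<le> Zu" using Hy[OF s, of j0] e by (simp add: norm_minus_commute)
  finally have "?cm - Zu \<le> inner e (y s $ j0)" using j0 by simp
  also have "\<dots> \<le> (MAX j. inner e (y s $ j))" by simp
  finally show ?thesis using zb unfolding zet_def by linarith
qed

lemma zet_start:
  fixes e :: "real^'d"
  assumes e: "norm e = 1" and Zu: "0 \<le> Zu"
  shows "zet e Zu t0 i t0 \<le> hull_dist (x t0) (y t0)"
proof -
  have "inner e (x t0 $ i) - (MAX j. inner e (y t0 $ j)) \<le> infdist (x t0 $ i) (convex hull (range (\<lambda>j. y t0 $ j)))"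
    by (rule G1[OF e])
  also have "\<dots> \<le> hull_dist (x t0) (y t0)" by (rule hull_dist_ge)
  finally show ?thesis unfolding zet_def Wf_def using Zu by simp
qed

lemma window_inv:
  fixes e :: "real^'d"
  assumes t0: "0 \<le> t0" "t0 \<le> t1" and e: "norm e = 1" and Zu: "0 \<le> Zu"
    and Hy: "\<And>j s. s \<in> {t0..t1} \<Longrightarrow> norm (y s $ j - y t0 $ j) \<le> Zu"
    and s: "s \<in> {t0..t1}"
  shows "inner e (x s $ i) - (MAX j. inner e (y s $ j)) \<le> hull_dist (x t0) (y t0) + 2 * Zu + Wf w t0 s"
proof -
  have "\<forall>i. \<forall>s\<in>{t0..t1}. zet e Zu t0 i s \<le> hull_dist (x t0) (y t0)"
    by (rule W.all_le_M[OF finite_sw t0(2) hull_dist_nonneg zet_cont[OF t0(1)] zet_dhyp[OF t0(1) e Hy] zet_start[OF e Zu]])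
  then show ?thesis using window_core[OF t0 e Zu Hy _ s] s by blast
qed

lemma window_contr:
  fixes e :: "real^'d"
  assumes t0: "0 \<le> t0" and e: "norm e = 1" and Zu: "0 \<le> Zu"
    and t1: "t1 = t0 + real CARD('n) * Wd" and tW: "tauD \<le> Wd" and ac: "W.act \<sigma> tauD Wd t0"
    and Hy: "\<And>j s. s \<in> {t0..t1} \<Longrightarrow> norm (y s $ j - y t0 $ j) \<le> Zu"
  shows "inner e (x t1 $ i) - (MAX j. inner e (y t1 $ j))
     \<le> (1 - W.kap tauD Wd ^ CARD('n)) * hull_dist (x t0) (y t0) + 2 * Zu + Wf w t0 t1"
proof -
  have t01: "t0 \<le> t1" using t1 tW tauD by simp
  have "\<forall>i. zet e Zu t0 i t1 \<le> hull_dist (x t0) (y t0) - W.kap tauD Wd ^ CARD('n) * hull_dist (x t0) (y t0)"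
    unfolding t1
  proof (rule W.contraction[OF finite_sw[of "t0 + real CARD('n) * Wd"] tauD tW ac hull_dist_nonneg[of "x t0" "y t0"]])
    show "continuous_on {t0..t0 + real CARD('n) * Wd} (zet e Zu t0 i)" for i by (rule zet_cont[OF t0])
    show "W.dhyp \<sigma> (zet e Zu t0) (ts ` {m. ts m \<le> t0 + real CARD('n) * Wd}) t0 (t0 + real CARD('n) * Wd)"
      by (rule zet_dhyp[OF t0 e]) (use Hy t1 in auto)
    show "zet e Zu t0 i t0 \<le> hull_dist (x t0) (y t0)" for i by (rule zet_start[OF e Zu])
  qed
  then have "zet e Zu t0 i t1 \<le> (1 - W.kap tauD Wd ^ CARD('n)) * hull_dist (x t0) (y t0)"
    by (simp add: algebra_simps)
  from window_core[OF t0 t01 e Zu Hy this] t01 show ?thesis by simp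
qed

end

context sys2 begin

abbreviation "zn s \<equiv> z_norm u w y s"

lemma zn_ge_u: "norm (u j (y s) s) \<le> zn s"
proof -
  have "(norm (u j (y s) s))\<^sup>2 \<le> (\<Sum>j\<in>UNIV. (norm (u j (y s) s))\<^sup>2)" by (rule member_le_sum) auto
  also have "\<dots> \<le> (\<Sum>j\<in>UNIV. (norm (u j (y s) s))\<^sup>2) + (\<Sum>i\<in>UNIV. (norm (w i s))\<^sup>2)"
    by (simp add: sum_nonneg)
  finally show ?thesis unfolding z_norm_def by (simp add: real_le_rsqrt)
qed

lemma zn_ge_w: "norm (w i s) \<le> zn s"
proof -
  have "(norm (w i s))\<^sup>2 \<le> (\<Sum>i\<in>UNIV. (norm (w i s))\<^sup>2)" by (rule member_le_sum) auto
  also have "\<dots> \<le> (\<Sum>j\<in>UNIV. (norm (u j (y s) s))\<^sup>2) + (\<Sum>i\<in>UNIV. (norm (w i s))\<^sup>2)"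
    by (simp add: sum_nonneg)
  finally show ?thesis unfolding z_norm_def by (simp add: real_le_rsqrt)
qed

lemma zn_nonneg: "0 \<le> zn s"
  unfolding z_norm_def by (simp add: sum_nonneg)

definition "Cc = real CARD('n) + 2"

lemma Cc_ge: "Cc \<ge> 1" unfolding Cc_def by simp

context
  fixes tend :: real
  assumes zint: "(\<lambda>s. zn s) integrable_on {0..tend}"
begin

lemma zint_sub: "0 \<le> p \<Longrightarrow> q \<le> tend \<Longrightarrow> (\<lambda>s. zn s) integrable_on {p..q}"
  by (rule integrable_on_subinterval[OF zint]) auto

lemma Hy_bound:
  assumes "0 \<le> t0" "t0 \<le> s" "s \<le> t1" "t1 \<le> tend"
  shows "norm (y s $ j - y t0 $ j) \<le> integral {t0..t1} (\<lambda>s. zn s)"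
proof -
  have "norm (y s $ j - y t0 $ j) = norm (integral {t0..s} (\<lambda>s. ul j s))" using y_incr[of t0 s j] assms by simp
  also have "\<dots> \<le> integral {t0..s} (\<lambda>s. zn s)"
  proof (rule integral_norm_bound_integral)
    show "(\<lambda>s. ul j s) integrable_on {t0..s}"
    proof (rule integrable_on_subinterval)
      show "(\<lambda>s. ul j s) integrable_on {0..s}" using has_integral_integrable[OF y_int[of s j]] assms by auto
    qed (use assms in auto)
    show "(\<lambda>s. zn s) integrable_on {t0..s}" using assms by (intro zint_sub) auto
    show "norm (ul j r) \<le> zn r" for r by (rule zn_ge_u)
  qed
  also have "\<dots> \<le> integral {t0..t1} (\<lambda>s. zn s)"
    using assms by (intro integral_subset_le zint_sub) (auto simp: zn_nonneg)
  finally show ?thesis .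
qed

lemma Wf_bound:
  assumes "0 \<le> t0" "t0 \<le> s" "s \<le> tend"
  shows "Wf w t0 s \<le> real CARD('n) * integral {t0..s} (\<lambda>s. zn s)"
proof -
  have "Wf w t0 s \<le> integral {t0..s} (\<lambda>r. real CARD('n) * zn r)"
    unfolding Wf_def
  proof (rule integral_le)
    show "(\<lambda>r. \<Sum>l\<in>UNIV. norm (w l r)) integrable_on {t0..s}"
      by (intro integrable_continuous_real wsum_cont)
    show "(\<lambda>r. real CARD('n) * zn r) integrable_on {t0..s}"
      using integrable_cmul[OF zint_sub[of t0 s], of "real CARD('n)"] assms by simp
    fix r
    have "(\<Sum>l\<in>UNIV. norm (w l r)) \<le> (\<Sum>l\<in>(UNIV::'n set). zn r)" by (intro sum_mono zn_ge_w)
    then show "(\<Sum>l\<in>UNIV. norm (w l r)) \<le> real CARD('n) * zn r" by simp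
  qed
  then show ?thesis by simp
qed

definition "GG s = integral {0..s} (\<lambda>r. Cc * zn r)"

lemma GG_diff:
  assumes "0 \<le> t0" "t0 \<le> t1" "t1 \<le> tend"
  shows "GG t1 - GG t0 = Cc * integral {t0..t1} (\<lambda>s. zn s)"
proof -
  have i: "(\<lambda>r. Cc * zn r) integrable_on {0..t1}"
    using integrable_cmul[OF zint_sub[of 0 t1], of Cc] assms by simp
  have "integral {0..t0} (\<lambda>r. Cc * zn r) + integral {t0..t1} (\<lambda>r. Cc * zn r) = integral {0..t1} (\<lambda>r. Cc * zn r)"
    using assms by (intro Henstock_Kurzweil_Integration.integral_combine i) auto
  then show ?thesis unfolding GG_def by simp
qed

lemma V_inv:
  assumes "0 \<le> t0" "t0 \<le> s" "s \<le> tend"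
  shows "hull_dist (x s) (y s) \<le> hull_dist (x t0) (y t0) + (GG s - GG t0)"
proof -
  define Zu where "Zu = integral {t0..s} (\<lambda>s. zn s)"
  have Zu: "0 \<le> Zu" unfolding Zu_def using assms by (intro integral_nonneg zint_sub) (auto simp: zn_nonneg)
  have Hy: "\<And>j r. r \<in> {t0..s} \<Longrightarrow> norm (y r $ j - y t0 $ j) \<le> Zu"
    unfolding Zu_def using assms by (intro Hy_bound) auto
  have B: "2 * Zu + Wf w t0 s \<le> GG s - GG t0"
    using Wf_bound[OF assms] GG_diff[OF assms] unfolding Zu_def Cc_def by (simp add: algebra_simps)
  show ?thesis
  proof (rule hd_bound)
    show "0 \<le> hull_dist (x t0) (y t0) + (GG s - GG t0)" using hull_dist_nonneg[of "x t0" "y t0"] B Zu Wf_nonneg[OF assms(2)] by linarith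
    fix e :: "real^'d" and i assume e: "norm e = 1"
    show "inner e (x s $ i) - (MAX j. inner e (y s $ j)) \<le> hull_dist (x t0) (y t0) + (GG s - GG t0)"
      using window_inv[OF assms(1,2) e Zu Hy, of s i] assms B by simp
  qed
qed

lemma V_contr:
  assumes t0: "0 \<le> t0" and t1: "t1 = t0 + real CARD('n) * Wd" and te: "t1 \<le> tend"
    and tW: "tauD \<le> Wd" and ac: "W.act \<sigma> tauD Wd t0"
  shows "hull_dist (x t1) (y t1) \<le> (1 - W.kap tauD Wd ^ CARD('n)) * hull_dist (x t0) (y t0) + (GG t1 - GG t0)"
proof -
  have t01: "t0 \<le> t1" using t1 tW tauD by simp
  define Zu where "Zu = integral {t0..t1} (\<lambda>s. zn s)"
  have Zu: "0 \<le> Zu" unfolding Zu_def using t01 t0 te by (intro integral_nonneg zint_sub) (auto simp: zn_nonneg)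
  have Hy: "\<And>j r. r \<in> {t0..t1} \<Longrightarrow> norm (y r $ j - y t0 $ j) \<le> Zu"
    unfolding Zu_def using t0 te by (intro Hy_bound) auto
  have B: "2 * Zu + Wf w t0 t1 \<le> GG t1 - GG t0"
    using Wf_bound[OF t0 t01 te] GG_diff[OF t0 t01 te] unfolding Zu_def Cc_def by (simp add: algebra_simps)
  have kb: "0 < W.kap tauD Wd" "W.kap tauD Wd < 1" using W.kap_bounds[OF tauD, of Wd] tW tauD by auto
  have "0 \<le> 1 - W.kap tauD Wd ^ CARD('n)" using kb by (simp add: power_le_one)
  then have nn: "0 \<le> (1 - W.kap tauD Wd ^ CARD('n)) * hull_dist (x t0) (y t0)"
    using hull_dist_nonneg[of "x t0" "y t0"] by simp
  show ?thesis
  proof (rule hd_bound)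
    show "0 \<le> (1 - W.kap tauD Wd ^ CARD('n)) * hull_dist (x t0) (y t0) + (GG t1 - GG t0)"
      using nn B Zu Wf_nonneg[OF t01] by linarith
    fix e :: "real^'d" and i assume e: "norm e = 1"
    show "inner e (x t1 $ i) - (MAX j. inner e (y t1 $ j)) \<le> (1 - W.kap tauD Wd ^ CARD('n)) * hull_dist (x t0) (y t0) + (GG t1 - GG t0)"
      using window_contr[OF t0 e Zu t1 tW ac Hy, of i] B by simp
  qed
qed

end
end

context sys2 begin

lemma final_bound:
  fixes T tend :: real
  assumes T: "T > 0" and conn: "\<forall>t\<ge>0. L_connected (joint_graph \<sigma> t (t + T))"
    and zint: "(\<lambda>s. zn s) integrable_on {0..tend}" and te: "0 \<le> tend"
  defines "Wd \<equiv> T + 2 * tauD"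
  defines "\<rho> \<equiv> 1 - W.kap tauD Wd ^ CARD('n)"
  defines "P \<equiv> real CARD('n) * Wd"
  shows "hull_dist (x tend) (y tend) \<le> hull_dist (x 0) (y 0) / \<rho> * exp (ln \<rho> / P * tend) + GG tend"
proof -
  have tW: "tauD \<le> Wd" unfolding Wd_def using T tauD by simp
  have Wp: "Wd > 0" using tW tauD by simp
  have Pp: "P > 0" unfolding P_def using Wp by simp
  have kb: "0 < W.kap tauD Wd" "W.kap tauD Wd < 1" using W.kap_bounds[OF tauD Wp] by auto
  have kn: "0 < W.kap tauD Wd ^ CARD('n)" "W.kap tauD Wd ^ CARD('n) < 1"
    using kb by (auto intro: power_less_one_iff[THEN iffD2])
  have rho: "0 < \<rho>" "\<rho> < 1" unfolding \<rho>_def using kn by auto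
  have ac: "W.act \<sigma> tauD Wd t0" if "t0 \<ge> 0" for t0
    unfolding Wd_def by (rule W.act_from[OF dwell_axioms T conn that])
  have GG0: "GG 0 = 0" unfolding GG_def[OF zint] by simp
  have GGnn: "0 \<le> GG s" if "0 \<le> s" "s \<le> tend" for s
    unfolding GG_def[OF zint] using that
  proof (intro integral_nonneg)
    show "(\<lambda>r. Cc * zn r) integrable_on {0..s}"
      using integrable_cmul[OF zint_sub[OF zint, of 0 s], of Cc] that by simp
  qed (auto simp: zn_nonneg Cc_def)
  define V0 where "V0 = hull_dist (x 0) (y 0)"
  have V0: "0 \<le> V0" unfolding V0_def by (rule hull_dist_nonneg)
  have steps: "hull_dist (x (real m * P)) (y (real m * P)) \<le> \<rho> ^ m * V0 + GG (real m * P)"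
    if "real m * P \<le> tend" for m
    using that
  proof (induction m)
    case 0 then show ?case using GG0 V0_def by simp
  next
    case (Suc m)
    define t0 where "t0 = real m * P"
    have t0: "0 \<le> t0" unfolding t0_def using Pp by simp
    have t1: "real (Suc m) * P = t0 + real CARD('n) * Wd" unfolding t0_def P_def by (simp add: algebra_simps)
    have le: "t0 \<le> tend" using Suc.prems Pp unfolding t0_def by (simp add: algebra_simps)
    have IH: "hull_dist (x t0) (y t0) \<le> \<rho> ^ m * V0 + GG t0" using Suc.IH le unfolding t0_def by simp
    have "hull_dist (x (real (Suc m) * P)) (y (real (Suc m) * P)) \<le> \<rho> * hull_dist (x t0) (y t0) + (GG (real (Suc m) * P) - GG t0)"
      unfolding \<rho>_def by (rule V_contr[OF zint t0 t1 _ tW ac[OF t0]]) (use Suc.prems in simp)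
    also have "\<dots> \<le> \<rho> * (\<rho> ^ m * V0 + GG t0) + (GG (real (Suc m) * P) - GG t0)"
      using IH rho by (intro add_right_mono mult_left_mono) auto
    also have "\<dots> \<le> \<rho> ^ Suc m * V0 + GG (real (Suc m) * P)"
    proof -
      have "\<rho> * GG t0 \<le> GG t0" using rho GGnn[OF t0 le] by (simp add: mult_left_le_one_le)
      then show ?thesis by (simp add: algebra_simps)
    qed
    finally show ?case .
  qed
  define m where "m = nat \<lfloor>tend / P\<rfloor>"
  have mP: "real m * P \<le> tend" "tend < real m * P + P"
  proof -
    have fl: "real_of_int \<lfloor>tend / P\<rfloor> \<le> tend / P" "tend / P < real_of_int \<lfloor>tend / P\<rfloor> + 1" by linarith+
    have "0 \<le> \<lfloor>tend / P\<rfloor>" using te Pp by simp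
    then have rm: "real m = real_of_int \<lfloor>tend / P\<rfloor>" unfolding m_def by simp
    have "real m \<le> tend / P" using fl(1) unfolding rm .
    then show "real m * P \<le> tend" using Pp by (simp add: le_divide_eq)
    have "tend / P < real m + 1" using fl(2) unfolding rm .
    then have "tend < (real m + 1) * P" using Pp by (simp add: divide_less_eq)
    then show "tend < real m * P + P" by (simp add: algebra_simps)
  qed
  have mP0: "0 \<le> real m * P" using Pp by simp
  have "hull_dist (x tend) (y tend) \<le> hull_dist (x (real m * P)) (y (real m * P)) + (GG tend - GG (real m * P))"
    by (rule V_inv[OF zint mP0 mP(1)]) simp
  also have "\<dots> \<le> \<rho> ^ m * V0 + GG tend" using steps[OF mP(1)] by simp
  also have "\<rho> ^ m * V0 \<le> V0 / \<rho> * exp (ln \<rho> / P * tend)"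
  proof -
    have "\<rho> ^ m = exp (real m * ln \<rho>)" using rho by (simp add: exp_of_nat_mult)
    also have "\<dots> \<le> exp ((tend / P - 1) * ln \<rho>)"
    proof -
      have "tend / P - 1 \<le> real m" using mP(2) Pp by (simp add: field_simps)
      moreover have "ln \<rho> < 0" using rho by simp
      ultimately show ?thesis by (simp add: mult_right_mono_neg)
    qed
    also have "\<dots> = exp (ln \<rho> / P * tend) / \<rho>"
    proof -
      have "(tend / P - 1) * ln \<rho> = ln \<rho> / P * tend - ln \<rho>" by (simp add: algebra_simps)
      then show ?thesis using rho by (simp add: exp_diff)
    qed
    finally have "\<rho> ^ m * V0 \<le> exp (ln \<rho> / P * tend) / \<rho> * V0" using V0 by (rule mult_right_mono)
    then show ?thesis by (simp add: mult.commute)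
  qed
  finally show ?thesis unfolding V0_def by simp
qed

end

lemma zn_meas:
  fixes u :: "'k::finite \<Rightarrow> real^'d^'k \<Rightarrow> real \<Rightarrow> real^'d" and w :: "'n::finite \<Rightarrow> real \<Rightarrow> real^'d"
  assumes um: "\<And>j. (\<lambda>s. u j (y s) s) \<in> borel_measurable (lebesgue_on {0..t})"
    and wm: "\<And>i. (\<lambda>s. w i s) \<in> borel_measurable (lebesgue_on {0..t})"
  shows "(\<lambda>s. z_norm u w y s) \<in> borel_measurable (lebesgue_on {0..t})"
  unfolding z_norm_def using um wm by measurable

lemma exp_neg_tendsto: "c < 0 \<Longrightarrow> ((\<lambda>t. exp (c * t)) \<longlongrightarrow> (0::real)) at_top"
proof -
  assume c: "c < 0"
  have "filterlim (\<lambda>t. c * t) at_bot at_top"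
    by (rule filterlim_tendsto_neg_mult_at_bot[OF tendsto_const c filterlim_ident])
  then show ?thesis by (rule filterlim_compose[OF exp_at_bot])
qed

theorem theorem2:
  fixes \<sigma> :: "real \<Rightarrow> ('n::finite, 'k::finite) digraph"
    and P :: "('n, 'k) digraph set"
    and tauD :: real
    and a :: "'n \<Rightarrow> 'n \<Rightarrow> real^'d^'n \<Rightarrow> real^'d^'k \<Rightarrow> real \<Rightarrow> real"
    and b :: "'n \<Rightarrow> 'k \<Rightarrow> real^'d^'n \<Rightarrow> real^'d^'k \<Rightarrow> real \<Rightarrow> real"
    and a_lo a_hi b_lo :: real
  assumes n_ge_2: "CARD('n) \<ge> 2"
    and P_finite: "finite P"
    and P_graphs: "\<forall>E \<in> P. no_arc_into_leader E"
    and sigma_in_P: "\<forall>t \<ge> 0. \<sigma> t \<in> P"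
    and dwell: "dwell_time_signal \<sigma> tauD"
    and a_cont: "\<forall>i j. continuous_on UNIV (\<lambda>(x, y, t). a i j x y t)"
    and b_cont: "\<forall>i j. continuous_on UNIV (\<lambda>(x, y, t). b i j x y t)"
    and weight_consts: "0 < a_lo" "a_lo \<le> a_hi" "0 < b_lo"
    and a_bounds: "\<forall>i j x y t. a_lo \<le> a i j x y t \<and> a i j x y t \<le> a_hi"
    and b_bound: "\<forall>i j x y t. b_lo \<le> b i j x y t"
    and ujlc: "UJLC \<sigma>"
  shows "\<exists>\<beta> \<gamma>. class_KL \<beta> \<and> class_K \<gamma> \<and>
    (\<forall>(u :: 'k \<Rightarrow> real^'d^'k \<Rightarrow> real \<Rightarrow> real^'d) (w :: 'n \<Rightarrow> real \<Rightarrow> real^'d) x y.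
       (\<forall>j t. continuous_on UNIV (\<lambda>v. u j v t)) \<longrightarrow>
       (\<forall>j v. piecewise_continuous (\<lambda>t. u j v t)) \<longrightarrow>
       (\<forall>i. continuous_on UNIV (w i)) \<longrightarrow>
       is_solution5 \<sigma> a b u w x y \<longrightarrow>
       (\<forall>t \<ge> 0. ennreal (hull_dist (x t) (y t))
          \<le> ennreal (\<beta> (hull_dist (x 0) (y 0)) t)
            + (\<integral>\<^sup>+ s \<in> {0..t}. ennreal (\<gamma> (z_norm u w y s)) \<partial>lborel)))"
proof -
  obtain ts where dw: "dwell \<sigma> tauD ts" using dwellI[OF dwell] by blast
  interpret D: dwell \<sigma> tauD ts by (rule dw)
  obtain T where T: "T > 0" and conn: "\<forall>t\<ge>0. L_connected (joint_graph \<sigma> t (t + T))"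
    using ujlc unfolding UJLC_def by blast
  interpret WB: wbounds "\<lambda>(i::'n) (j::'n) (r::real). a_lo" "\<lambda>(i::'n) (l::'k) (r::real). b_lo" a_lo a_hi b_lo
    by unfold_locales (use weight_consts in auto)
  define Wd where "Wd = T + 2 * tauD"
  define \<rho> where "\<rho> = 1 - WB.kap tauD Wd ^ CARD('n)"
  define P where "P = real CARD('n) * Wd"
  define C where "C = real CARD('n) + 2"
  define \<beta> where "\<beta> r t = r / \<rho> * exp (ln \<rho> / P * t)" for r t
  define \<gamma> where "\<gamma> r = C * r" for r
  have Wp: "Wd > 0" unfolding Wd_def using T D.tauD by simp
  have Pp: "P > 0" unfolding P_def using Wp by simp
  have kb: "0 < WB.kap tauD Wd" "WB.kap tauD Wd < 1" using WB.kap_bounds[OF D.tauD Wp] by auto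
  have kn: "0 < WB.kap tauD Wd ^ CARD('n)" "WB.kap tauD Wd ^ CARD('n) < 1"
    using kb by (auto intro: power_less_one_iff[THEN iffD2])
  have rho: "0 < \<rho>" "\<rho> < 1" unfolding \<rho>_def using kn by auto
  have cneg: "ln \<rho> / P < 0" using rho Pp by (simp add: divide_neg_pos)
  have KL: "class_KL \<beta>"
    unfolding class_KL_def
  proof (intro conjI allI impI)
    fix t :: real assume "0 \<le> t"
    have cp: "exp (ln \<rho> / P * t) / \<rho> > 0" using rho by simp
    show "class_K (\<lambda>r. \<beta> r t)" unfolding class_K_def \<beta>_def
    proof (intro conjI)
      show "continuous_on {0..} (\<lambda>r. r / \<rho> * exp (ln \<rho> / P * t))" using rho by (intro continuous_intros) auto
      show "0 / \<rho> * exp (ln \<rho> / P * t) = 0" by simp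
      show "strict_mono_on {0..} (\<lambda>r. r / \<rho> * exp (ln \<rho> / P * t))"
        unfolding strict_mono_on_def using rho by (auto intro!: mult_strict_right_mono divide_strict_right_mono)
    qed
  next
    fix r :: real assume r: "0 \<le> r"
    show "antimono_on {0..} (\<beta> r)"
      unfolding \<beta>_def monotone_on_def
    proof (intro ballI impI)
      fix s t :: real assume st: "s \<le> t"
      have "ln \<rho> / P * t \<le> ln \<rho> / P * s" using cneg st by (intro mult_left_mono_neg) auto
      then have "exp (ln \<rho> / P * t) \<le> exp (ln \<rho> / P * s)" by simp
      then show "r / \<rho> * exp (ln \<rho> / P * t) \<le> r / \<rho> * exp (ln \<rho> / P * s)"
        using r rho by (intro mult_left_mono) auto
    qed
    show "(\<beta> r \<longlongrightarrow> 0) at_top"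
      unfolding \<beta>_def using tendsto_mult_right_zero[OF exp_neg_tendsto[OF cneg], of "r / \<rho>"] by simp
  qed
  have Kg: "class_K \<gamma>"
    unfolding class_K_def \<gamma>_def C_def strict_mono_on_def
    by (auto intro!: continuous_intros)
  show ?thesis
  proof (intro exI[of _ \<beta>] exI[of _ \<gamma>] conjI KL Kg allI impI)
    fix u :: "'k \<Rightarrow> real^'d^'k \<Rightarrow> real \<Rightarrow> real^'d" and w :: "'n \<Rightarrow> real \<Rightarrow> real^'d" and x y
    assume ucont: "\<forall>j t. continuous_on UNIV (\<lambda>v. u j v t)"
      and upw: "\<forall>j v. piecewise_continuous (\<lambda>t. u j v t)"
      and wcont: "\<forall>i. continuous_on UNIV (w i)"
      and sol: "is_solution5 \<sigma> a b u w x y"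
    interpret S: sys2 \<sigma> tauD ts a b u w x y a_lo a_hi b_lo
      by unfold_locales (use dw a_cont b_cont wcont sol weight_consts a_bounds b_bound in \<open>auto simp: dwell_def\<close>)
    fix t :: real assume t: "0 \<le> t"
    let ?N = "\<integral>\<^sup>+ s\<in>{0..t}. ennreal (\<gamma> (z_norm u w y s)) \<partial>lborel"
    show "ennreal (hull_dist (x t) (y t)) \<le> ennreal (\<beta> (hull_dist (x 0) (y 0)) t) + ?N"
    proof (cases "?N < \<infinity>")
      case False
      then have Ninf: "?N = \<infinity>" by (simp only: infinity_ennreal_def less_top[symmetric] not_not)
      show ?thesis unfolding Ninf by simp
    next
      case True
      have meas: "(\<lambda>s. z_norm u w y s) \<in> borel_measurable (lebesgue_on {0..t})"
      proof (rule zn_meas)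
        show "(\<lambda>s. u j (y s) s) \<in> borel_measurable (lebesgue_on {0..t})" for j
          using has_integral_integrable[OF S.y_int[OF t, of j]] by (rule integrable_imp_measurable)
        show "(\<lambda>s. w i s) \<in> borel_measurable (lebesgue_on {0..t})" for i
          using wcont by (intro continuous_imp_measurable_on_sets_lebesgue) (auto intro: continuous_on_subset)
      qed
      have C1: "C \<ge> 1" unfolding C_def by simp
      have fin: "(\<integral>\<^sup>+ s\<in>{0..t}. ennreal (C * z_norm u w y s) \<partial>lborel) < \<infinity>" using True unfolding \<gamma>_def .
      from nn_fin_integrable[OF meas _ C1 fin] S.zn_nonneg
      have zint: "(\<lambda>s. z_norm u w y s) integrable_on {0..t}"
        and Neq: "?N = ennreal (integral {0..t} (\<lambda>s. C * z_norm u w y s))" unfolding \<gamma>_def by auto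
      have GGeq: "S.GG t = integral {0..t} (\<lambda>s. C * z_norm u w y s)"
        unfolding S.GG_def[OF zint] S.Cc_def C_def ..
      have bound: "hull_dist (x t) (y t) \<le> \<beta> (hull_dist (x 0) (y 0)) t + S.GG t"
        using S.final_bound[OF T conn zint t] unfolding \<beta>_def \<rho>_def P_def Wd_def by simp
      have GGnn: "0 \<le> S.GG t" unfolding GGeq using zint
        by (intro integral_nonneg) (auto simp: C_def S.zn_nonneg integrable_cmul[OF zint, of C, simplified])
      have bnn: "0 \<le> \<beta> (hull_dist (x 0) (y 0)) t" unfolding \<beta>_def using rho hull_dist_nonneg[of "x 0" "y 0"] by simp
      have "ennreal (hull_dist (x t) (y t)) \<le> ennreal (\<beta> (hull_dist (x 0) (y 0)) t + S.GG t)"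
        using bound by (rule ennreal_leI)
      also have "\<dots> = ennreal (\<beta> (hull_dist (x 0) (y 0)) t) + ennreal (S.GG t)" using bnn GGnn by simp
      finally show ?thesis unfolding Neq GGeq .
    qed
  qed
qed

end
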